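(* Let $n\ge 2$, let $\Gamma=(\gamma_{i,j})\in\mathcal{M}_n(\mathbb{R})$ be symmetric with entries in $[0,1]$, zero diagonal, and at least one strictly positive off-diagonal entry in each row, such that the weighted graph with weight matrix $\Gamma$ is connected. Let $\boldsymbol{\eta}=\Gamma\mathbf{1}_n$, $L=\operatorname{diag}(\boldsymbol{\eta})-\Gamma$, let $\lambda,\mu>0$, and $A=(a_{i,j})=\lambda\mathsf{I}_n+\mu L$. Let $\mathsf{P}$ be either $\mathsf{P}_a\coloneqq\lambda\mathsf{I}_n+\mu\operatorname{diag}(\boldsymbol{\eta})$ or $\mathsf{P}_b\coloneqq\operatorname{diag}\big([\sum_{j=1}^n a_{i,j}^2]^{1/2}\big)_{i=1,\dots,n}$. Let $X\in\{Q,U\}$, where $Q,U\in\mathcal{M}_n(\mathbb{R})$ are defined by their columns: $Q\mathbf{e}_1=\mathbf{1}_n$, $Q\mathbf{e}_i=\mathbf{e}_1-\mathbf{e}_i$ for $i=2,\dots,n$; and $U\mathbf{e}_1=n^{-1/2}\mathbf{1}_n$, $U\mathbf{e}_k=(k(k-1))^{-1/2}\big(\sum_{j=1}^{k-1}\mathbf{e}_j-(k-1)\mathbf{e}_k\big)$ for $k=2,\dots,n$. Set $A_X\coloneqq X^{-1}AX$, $D_X\coloneqq X^{-1}\mathsf{P}X$, and let $\pi_2(M)\coloneqq M_{2:n,2:n}$ denote the trailing $(n-1)\times(n-1)$ principal submatrix. Then all eigenvalues of $\pi_2(D_X^{-1}A_X)$ are real, its smallest eigenvalue is strictly positive, and every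 eigenvalue $\theta$ of $\pi_2(D_X^{-1}A_X)$ satisfies \[ a(\mathsf{P}^{-1}A)-\frac{\lambda}{\lambda+\mu\min\boldsymbol{\eta}}\le\theta\le\rho(\mathsf{P}^{-1}A) \] as well as $\theta\le\min\big\{2,\ \frac{n}{n-1}\frac{\rho(L)}{a(L)}\big\}$.
   Context: $\mathbf{e}_1,\dots,\mathbf{e}_n$ is the canonical basis, $\mathbf{1}_n$ the all-ones vector, $\mathsf{I}_n$ the identity; $\min\boldsymbol{\eta}$ is the smallest entry of $\boldsymbol{\eta}$. For a matrix $M$ with real eigenvalues $\lambda_1,\dots,\lambda_n$ ordered so that $|\lambda_1|\le\cdots\le|\lambda_n|$, $\rho(M)\coloneqq\lambda_n$ is the spectral radius and $a(M)\coloneqq\lambda_2$ is the algebraic connectivity (for $M=\mathsf{P}^{-1}A$ or $M=L$ the eigenvalues are real and nonnegative, so $a(M)$ is the second smallest eigenvalue counted with multiplicity). *)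

theory Defs
  imports "Jordan_Normal_Form.Char_Poly"
begin

(* Indices are 0-based: mathematical index i corresponds to i-1. *)

definition mat_inv :: "real mat \<Rightarrow> real mat" where
  "mat_inv M = (SOME B. B \<in> carrier_mat (dim_row M) (dim_row M) \<and>
      M * B = 1\<^sub>m (dim_row M) \<and> B * M = 1\<^sub>m (dim_row M))"

definition diag_of :: "nat \<Rightarrow> (nat \<Rightarrow> real) \<Rightarrow> real mat" where
  "diag_of n f = mat n n (\<lambda>(i,j). if i = j then f i else 0)"

definition pi2 :: "real mat \<Rightarrow> real mat" where
  "pi2 M = mat (dim_row M - 1) (dim_col M - 1) (\<lambda>(i,j). M $$ (i+1, j+1))"

definition eig_list :: "real mat \<Rightarrow> real list" where
  "eig_list M = sort_key abs (sorted_list_of_multiset (proots (char_poly M)))"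

definition spec_rad :: "real mat \<Rightarrow> real" where
  "spec_rad M = last (eig_list M)"

definition alg_conn :: "real mat \<Rightarrow> real" where
  "alg_conn M = eig_list M ! 1"

definition Qmat :: "nat \<Rightarrow> real mat" where
  "Qmat n = mat n n (\<lambda>(i,j). if j = 0 then 1
                            else if i = 0 then 1 else if i = j then -1 else 0)"

definition Umat :: "nat \<Rightarrow> real mat" where
  "Umat n = mat n n (\<lambda>(i,j). if j = 0 then 1 / sqrt (real n)
       else (let k = real (j+1) in
             (if i < j then 1 else if i = j then -(k - 1) else 0) / sqrt (k * (k - 1))))"

definition weighted_connected :: "nat \<Rightarrow> real mat \<Rightarrow> bool" where
  "weighted_connected n G = (\<forall>i<n. \<forall>j<n.
      (i, j) \<in> {(p, q). p < n \<and> q < n \<and> G $$ (p, q) > 0}\<^sup>*)"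

end

theory Submission
  imports Defs "Jordan_Normal_Form.Schur_Decomposition"
begin


definition dotp :: "nat \<Rightarrow> (nat \<Rightarrow> real) \<Rightarrow> (nat \<Rightarrow> real) \<Rightarrow> real" where
  "dotp n x y = (\<Sum>i<n. x i * y i)"
definition mv :: "nat \<Rightarrow> (nat \<Rightarrow> nat \<Rightarrow> real) \<Rightarrow> (nat \<Rightarrow> real) \<Rightarrow> nat \<Rightarrow> real" where
  "mv n s x i = (\<Sum>j<n. s i j * x j)"
definition symf :: "nat \<Rightarrow> (nat \<Rightarrow> nat \<Rightarrow> real) \<Rightarrow> bool" where
  "symf n s = (\<forall>i<n. \<forall>j<n. s i j = s j i)"

lemma trace_comm:
  fixes X Y :: "'a::comm_ring_1 mat"
  assumes "X \<in> carrier_mat n n" "Y \<in> carrier_mat n n"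
  shows "(\<Sum>i<n. (X*Y)$$(i,i)) = (\<Sum>i<n. (Y*X)$$(i,i))"
proof -
  have "(\<Sum>i<n. (X*Y)$$(i,i)) = (\<Sum>i<n. \<Sum>k<n. X$$(i,k) * Y$$(k,i))"
    using assms by (intro sum.cong refl) (simp add: scalar_prod_def atLeast0LessThan)
  also have "\<dots> = (\<Sum>k<n. \<Sum>i<n. Y$$(k,i) * X$$(i,k))"
    by (subst sum.swap) (simp add: mult.commute)
  also have "\<dots> = (\<Sum>i<n. (Y*X)$$(i,i))"
    using assms by (intro sum.cong refl) (simp add: scalar_prod_def atLeast0LessThan)
  finally show ?thesis .
qed

lemma trace_similar:
  fixes A B :: "'a::comm_ring_1 mat"
  assumes sim: "similar_mat_wit A B P Q" and A: "A \<in> carrier_mat n n"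
  shows "(\<Sum>i<n. A$$(i,i)) = (\<Sum>i<n. B$$(i,i))"
proof -
  from sim A have c: "B \<in> carrier_mat n n" "P \<in> carrier_mat n n" "Q \<in> carrier_mat n n"
    and QP: "Q * P = 1\<^sub>m n" and AE: "A = P * B * Q"
    unfolding similar_mat_wit_def Let_def by auto
  have "(\<Sum>i<n. A$$(i,i)) = (\<Sum>i<n. ((P * B) * Q)$$(i,i))" using AE by simp
  also have "\<dots> = (\<Sum>i<n. (Q * (P * B))$$(i,i))"
    by (rule trace_comm) (use c in auto)
  also have "Q * (P * B) = (Q * P) * B" using c by (simp add: assoc_mult_mat)
  also have "\<dots> = B" using QP c by simp
  finally show ?thesis .
qed

lemma sym_eig_ne:
  assumes n: "n > 0" and sym: "symf n s" and tr: "(\<Sum>i<n. s i i) \<noteq> real n * c"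
  shows "\<exists>e x. e \<noteq> c \<and> (\<exists>i<n. x i \<noteq> 0) \<and> (\<forall>i<n. mv n s x i = e * x i)"
proof -
  define Nm where "Nm = mat n n (\<lambda>(i,j). complex_of_real (s i j))"
  have Nc: "Nm \<in> carrier_mat n n" by (simp add: Nm_def)
  obtain as where cp: "char_poly Nm = (\<Prod>a\<leftarrow>as. [:-a,1:])" and len: "length as = n"
    using char_poly_factorized[OF Nc] by blast
  obtain B P Q where sd: "schur_decomposition Nm as = (B,P,Q)"
    by (cases "schur_decomposition Nm as") auto
  from schur_decomposition[OF Nc cp sd] have sim: "similar_mat_wit Nm B P Q"
    and dg: "diag_mat B = as" by auto
  have Bc: "B \<in> carrier_mat n n" using sim Nc unfolding similar_mat_wit_def Let_def by auto
  have "(\<Sum>i<n. Nm$$(i,i)) = (\<Sum>i<n. B$$(i,i))" by (rule trace_similar[OF sim Nc])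
  also have "\<dots> = sum_list as"
    using dg Bc unfolding diag_mat_def
    by (auto simp: sum_set_upt_conv_sum_list_nat[symmetric] atLeast0LessThan)
  finally have trs: "complex_of_real (\<Sum>i<n. s i i) = sum_list as"
    by (simp add: Nm_def)
  have "\<exists>a\<in>set as. a \<noteq> complex_of_real c"
  proof (rule ccontr)
    assume "\<not> ?thesis"
    hence "replicate (length as) (complex_of_real c) = as"
      by (intro replicate_length_same) auto
    hence "sum_list as = of_nat n * complex_of_real c"
      using len by (metis sum_list_replicate)
    with trs have "complex_of_real (\<Sum>i<n. s i i) = complex_of_real (real n * c)" by simp
    hence "(\<Sum>i<n. s i i) = real n * c" using of_real_eq_iff by blast
    with tr show False by simp
  qed
  then obtain a where a: "a \<in> set as" "a \<noteq> complex_of_real c" by blast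
  have "poly (char_poly Nm) a = 0" unfolding cp using a
    by (simp add: poly_prod_list_zero_iff)
  hence "eigenvalue Nm a" using eigenvalue_root_char_poly[OF Nc] by simp
  then obtain v where v: "v \<in> carrier_vec n" "v \<noteq> 0\<^sub>v n" "Nm *\<^sub>v v = a \<cdot>\<^sub>v v"
    unfolding eigenvalue_def eigenvector_def using Nc by auto
  have ev: "(\<Sum>j<n. complex_of_real (s i j) * v$j) = a * v$i" if i: "i < n" for i
  proof -
    have "(Nm *\<^sub>v v) $ i = (a \<cdot>\<^sub>v v) $ i" using v by simp
    thus ?thesis using i v by (simp add: Nm_def scalar_prod_def atLeast0LessThan)
  qed
  define z where "z = (\<Sum>i<n. cnj (v$i) * (\<Sum>j<n. complex_of_real (s i j) * v$j))"
  define w where "w = (\<Sum>i<n. cnj (v$i) * v$i)"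
  have zw: "z = a * w" unfolding z_def w_def
    by (simp add: ev sum_distrib_left mult.assoc mult.left_commute)
  have "cnj z = (\<Sum>i<n. \<Sum>j<n. v$i * complex_of_real (s i j) * cnj (v$j))"
    unfolding z_def by (simp add: sum_distrib_left mult.assoc)
  also have "\<dots> = (\<Sum>j<n. \<Sum>i<n. v$i * complex_of_real (s i j) * cnj (v$j))"
    by (rule sum.swap)
  also have "\<dots> = z" unfolding z_def sum_distrib_left
    using sym unfolding symf_def by (intro sum.cong refl) (auto simp: mult_ac)
  finally have cz: "cnj z = z" .
  have wr: "w = complex_of_real (\<Sum>i<n. (cmod (v$i))\<^sup>2)"
    unfolding w_def of_real_sum
    by (intro sum.cong refl) (metis complex_norm_square mult.commute of_real_power)
  obtain i0 where i0: "i0 < n" "v$i0 \<noteq> 0" using v by (metis vec_eq_iff carrier_vecD index_zero_vec)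
  have wpos: "(\<Sum>i<n. (cmod (v$i))\<^sup>2) > 0"
    by (rule sum_pos2[of _ i0]) (use i0 in auto)
  have eq: "cnj a * w = a * w"
    using cz zw wr by (metis complex_cnj_complex_of_real complex_cnj_mult)
  have wne: "w \<noteq> 0" using wpos wr by (metis less_irrefl of_real_eq_0_iff)
  have "cnj a = a" using mult_right_cancel[OF wne, THEN iffD1, OF eq] .
  hence "Im (cnj a) = Im a" by simp
  hence Ima: "Im a = 0" by simp
  define er where "er = Re a"
  have aer: "a = complex_of_real er" using Ima er_def by (intro complex_eqI) auto
  have re: "mv n s (\<lambda>i. Re (v$i)) i = er * Re (v$i)" if "i < n" for i
  proof -
    have "Re (\<Sum>j<n. complex_of_real (s i j) * v$j) = Re (a * v$i)" using ev[OF that] by (rule arg_cong)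
    moreover have "Re (\<Sum>j<n. complex_of_real (s i j) * v$j) = (\<Sum>j<n. s i j * Re (v$j))"
      unfolding Re_sum by (intro sum.cong refl) simp
    moreover have "Re (a * v$i) = er * Re (v$i)" unfolding aer by simp
    ultimately show ?thesis unfolding mv_def by simp
  qed
  have im: "mv n s (\<lambda>i. Im (v$i)) i = er * Im (v$i)" if "i < n" for i
  proof -
    have "Im (\<Sum>j<n. complex_of_real (s i j) * v$j) = Im (a * v$i)" using ev[OF that] by (rule arg_cong)
    moreover have "Im (\<Sum>j<n. complex_of_real (s i j) * v$j) = (\<Sum>j<n. s i j * Im (v$j))"
      unfolding Im_sum by (intro sum.cong refl) simp
    moreover have "Im (a * v$i) = er * Im (v$i)" unfolding aer by simp
    ultimately show ?thesis unfolding mv_def by simp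
  qed
  have erc: "er \<noteq> c" using a(2) aer by blast
  show ?thesis
  proof (cases "Re (v$i0) = 0")
    case True
    hence "Im (v$i0) \<noteq> 0" using i0(2) complex_eqI[of "v$i0" 0] by auto
    thus ?thesis using erc im i0(1) by (intro exI[of _ er] exI[of _ "\<lambda>i. Im (v$i)"]) auto
  next
    case False
    thus ?thesis using erc re i0(1) by (intro exI[of _ er] exI[of _ "\<lambda>i. Re (v$i)"]) auto
  qed
qed


definition orthn :: "nat \<Rightarrow> nat \<Rightarrow> (nat \<Rightarrow> nat \<Rightarrow> real) \<Rightarrow> bool" where
  "orthn n k v = (\<forall>l<k. \<forall>l'<k. dotp n (v l) (v l') = (if l = l' then 1 else 0))"

definition proj :: "nat \<Rightarrow> nat \<Rightarrow> (nat \<Rightarrow> nat \<Rightarrow> real) \<Rightarrow> (nat \<Rightarrow> real) \<Rightarrow> nat \<Rightarrow> real" where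
  "proj n k v x i = x i - (\<Sum>l<k. dotp n (v l) x * v l i)"

lemma dotp_comm: "dotp n x y = dotp n y x"
  unfolding dotp_def by (simp add: mult.commute)

lemma sum_swap_r: "(\<Sum>j<n. (\<Sum>l<k. f l j) * (x j::real)) = (\<Sum>l<k. \<Sum>j<n. f l j * x j)"
proof -
  have "(\<Sum>j<n. (\<Sum>l<k. f l j) * x j) = (\<Sum>j<n. \<Sum>l<k. f l j * x j)"
    by (simp add: sum_distrib_right)
  also have "\<dots> = (\<Sum>l<k. \<Sum>j<n. f l j * x j)" by (rule sum.swap)
  finally show ?thesis .
qed

lemma sum_swap_l: "(\<Sum>j<n. (x j::real) * (\<Sum>l<k. f l j)) = (\<Sum>l<k. \<Sum>j<n. x j * f l j)"
proof -
  have "(\<Sum>j<n. x j * (\<Sum>l<k. f l j)) = (\<Sum>j<n. \<Sum>l<k. x j * f l j)"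
    by (simp add: sum_distrib_left)
  also have "\<dots> = (\<Sum>l<k. \<Sum>j<n. x j * f l j)" by (rule sum.swap)
  finally show ?thesis .
qed

lemma dotp_proj:
  assumes o: "orthn n k v" and l: "l < k"
  shows "dotp n (v l) (proj n k v x) = 0"
proof -
  have "dotp n (v l) (proj n k v x) = dotp n (v l) x - (\<Sum>i<n. v l i * (\<Sum>l'<k. dotp n (v l') x * v l' i))"
    unfolding proj_def dotp_def by (simp add: right_diff_distrib sum_subtractf)
  also have "(\<Sum>i<n. v l i * (\<Sum>l'<k. dotp n (v l') x * v l' i)) = (\<Sum>l'<k. \<Sum>i<n. v l i * (dotp n (v l') x * v l' i))"
    by (rule sum_swap_l)
  also have "\<dots> = (\<Sum>l'<k. dotp n (v l') x * dotp n (v l) (v l'))"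
    unfolding dotp_def by (simp add: sum_distrib_left mult_ac)
  also have "\<dots> = (\<Sum>l'<k. if l = l' then dotp n (v l') x else 0)"
    using o l unfolding orthn_def by (intro sum.cong refl) auto
  also have "\<dots> = dotp n (v l) x" using l by simp
  finally show ?thesis by simp
qed

lemma proj_id:
  assumes "\<forall>l<k. dotp n (v l) x = 0"
  shows "proj n k v x i = x i"
  using assms unfolding proj_def by simp

lemma mv_comp:
  "mv n (\<lambda>i j. \<Sum>a<n. f i a * g a j) x i = mv n f (mv n g x) i"
proof -
  have "mv n (\<lambda>i j. \<Sum>a<n. f i a * g a j) x i = (\<Sum>a<n. \<Sum>j<n. f i a * g a j * x j)"
    unfolding mv_def by (rule sum_swap_r)
  also have "\<dots> = mv n f (mv n g x) i"
    unfolding mv_def by (simp add: sum_distrib_left mult_ac)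
  finally show ?thesis .
qed

lemma dotp_sym_mv:
  assumes "symf n s"
  shows "dotp n y (mv n s x) = dotp n (mv n s y) x"
proof -
  have "dotp n y (mv n s x) = (\<Sum>j<n. \<Sum>i<n. y i * (s i j * x j))"
    unfolding dotp_def mv_def by (rule sum_swap_l)
  also have "\<dots> = (\<Sum>j<n. (\<Sum>i<n. s j i * y i) * x j)"
  proof (intro sum.cong refl)
    fix j assume j: "j \<in> {..<n}"
    have "(\<Sum>i<n. y i * (s i j * x j)) = (\<Sum>i<n. s j i * y i * x j)"
      using assms j unfolding symf_def by (intro sum.cong refl) auto
    thus "(\<Sum>i<n. y i * (s i j * x j)) = (\<Sum>i<n. s j i * y i) * x j"
      by (simp add: sum_distrib_right)
  qed
  also have "\<dots> = dotp n (mv n s y) x"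
    unfolding dotp_def mv_def ..
  finally show ?thesis .
qed

lemma crux:
  assumes sym: "symf n s" and k: "k < n" and o: "orthn n k v"
    and eig: "\<forall>l<k. \<forall>i<n. mv n s (v l) i = d l * v l i"
  shows "\<exists>x e. dotp n x x = 1 \<and> (\<forall>l<k. dotp n (v l) x = 0) \<and> (\<forall>i<n. mv n s x i = e * x i)"
proof -
  define pm where "pm = (\<lambda>i j. (if i = j then 1 else 0) - (\<Sum>l<k. v l i * v l j))"
  define pg where "pg = (\<lambda>a j. \<Sum>b<n. s a b * pm b j)"
  define fst0 where "fst0 = (\<lambda>i j. \<Sum>a<n. pm i a * pg a j)"
  define t0 where "t0 = (\<Sum>i<n. fst0 i i)"
  define c where "c = t0 / real (n - k) + 1"
  define nm where "nm = (\<lambda>i j. fst0 i j + c * (\<Sum>l<k. v l i * v l j))"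
  have pm_mv: "mv n pm y i = proj n k v y i" if i: "i < n" for y i
  proof -
    have "mv n pm y i = (\<Sum>j<n. (if i = j then 1 else 0) * y j) - (\<Sum>j<n. (\<Sum>l<k. v l i * v l j) * y j)"
      unfolding mv_def pm_def by (simp add: left_diff_distrib sum_subtractf)
    also have "(\<Sum>j<n. (if i = j then 1 else 0) * y j) = (\<Sum>j<n. if i = j then y j else 0)"
      by (intro sum.cong refl) simp
    also have "\<dots> = y i" using i by simp
    also have "(\<Sum>j<n. (\<Sum>l<k. v l i * v l j) * y j) = (\<Sum>l<k. \<Sum>j<n. v l i * v l j * y j)"
      by (rule sum_swap_r)
    also have "\<dots> = (\<Sum>l<k. dotp n (v l) y * v l i)"
      unfolding dotp_def by (simp add: sum_distrib_left sum_distrib_right mult_ac)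
    finally show ?thesis unfolding proj_def .
  qed
  have pm_sym: "pm i j = pm j i" for i j unfolding pm_def by (simp add: mult.commute)
  have nm_sym: "symf n nm"
  proof -
    have "fst0 i j = fst0 j i" if "i < n" "j < n" for i j
    proof -
      have "fst0 i j = (\<Sum>a<n. \<Sum>b<n. pm i a * s a b * pm b j)"
        unfolding fst0_def pg_def by (simp add: sum_distrib_left mult_ac)
      also have "\<dots> = (\<Sum>b<n. \<Sum>a<n. pm i a * s a b * pm b j)" by (rule sum.swap)
      also have "\<dots> = (\<Sum>b<n. \<Sum>a<n. pm j b * s b a * pm a i)"
        using sym that unfolding symf_def by (intro sum.cong refl) (simp add: pm_sym mult_ac)
      also have "\<dots> = fst0 j i"
        unfolding fst0_def pg_def by (simp add: sum_distrib_left mult_ac)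
      finally show ?thesis .
    qed
    thus ?thesis unfolding symf_def nm_def by (simp add: mult.commute)
  qed
  have "(\<Sum>i<n. \<Sum>l<k. v l i * v l i) = (\<Sum>l<k. dotp n (v l) (v l))"
    unfolding dotp_def by (rule sum.swap)
  also have "\<dots> = real k" using o unfolding orthn_def by simp
  finally have trv: "(\<Sum>i<n. \<Sum>l<k. v l i * v l i) = real k" .
  have tr: "(\<Sum>i<n. nm i i) = t0 + c * real k"
    unfolding nm_def t0_def by (simp add: sum.distrib sum_distrib_left[symmetric] trv)
  have nk: "real (n - k) > 0" using k by simp
  have "(\<Sum>i<n. nm i i) \<noteq> real n * c"
  proof
    assume "(\<Sum>i<n. nm i i) = real n * c"
    hence "t0 = real (n - k) * c" using tr k by (simp add: of_nat_diff algebra_simps)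
    also have "\<dots> = t0 + real (n - k)" unfolding c_def using nk by (simp add: field_simps)
    finally show False using nk by simp
  qed
  from sym_eig_ne[OF _ nm_sym this] k obtain e x where
    ec: "e \<noteq> c" and xnz: "\<exists>i<n. x i \<noteq> 0" and ex: "\<forall>i<n. mv n nm x i = e * x i" by auto
  have nm_mv: "mv n nm x i = proj n k v (mv n s (proj n k v x)) i + c * (x i - proj n k v x i)"
    if i: "i < n" for i
  proof -
    have "mv n nm x i = mv n fst0 x i + (\<Sum>j<n. (c * (\<Sum>l<k. v l i * v l j)) * x j)"
      unfolding mv_def nm_def by (simp add: distrib_right sum.distrib)
    also have "(\<Sum>j<n. (c * (\<Sum>l<k. v l i * v l j)) * x j) = c * (\<Sum>j<n. (\<Sum>l<k. v l i * v l j) * x j)"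
      by (simp add: sum_distrib_left mult_ac)
    also have "(\<Sum>j<n. (\<Sum>l<k. v l i * v l j) * x j) = (\<Sum>l<k. \<Sum>j<n. v l i * v l j * x j)"
      by (rule sum_swap_r)
    also have "\<dots> = (\<Sum>l<k. v l i * dotp n (v l) x)"
      unfolding dotp_def by (simp add: sum_distrib_left mult_ac)
    also have "mv n fst0 x i = mv n pm (mv n pg x) i" unfolding fst0_def by (rule mv_comp)
    also have "\<dots> = proj n k v (mv n pg x) i" using i by (rule pm_mv)
    also have "mv n pg x = (\<lambda>a. mv n s (mv n pm x) a)" unfolding pg_def by (rule ext, rule mv_comp)
    also have "(\<lambda>a. mv n s (mv n pm x) a) = mv n s (proj n k v x)"
      by (intro ext) (unfold mv_def[of n s], intro sum.cong refl, simp add: pm_mv)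
    also have "(\<Sum>l<k. v l i * dotp n (v l) x) = x i - proj n k v x i"
      unfolding proj_def by (simp add: mult.commute)
    finally show ?thesis .
  qed
  have dproj: "dotp n (v l) (proj n k v y) = 0" if "l < k" for l y using dotp_proj[OF o that] .
  have orth: "dotp n (v l) x = 0" if l: "l < k" for l
  proof -
    have "dotp n (v l) (mv n nm x) = dotp n (v l) (\<lambda>i. e * x i)"
      unfolding dotp_def using ex by (intro sum.cong refl) auto
    also have "\<dots> = e * dotp n (v l) x" unfolding dotp_def by (simp add: sum_distrib_left mult_ac)
    finally have 1: "dotp n (v l) (mv n nm x) = e * dotp n (v l) x" .
    have "dotp n (v l) (mv n nm x) = dotp n (v l) (\<lambda>i. proj n k v (mv n s (proj n k v x)) i + c * (x i - proj n k v x i))"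
      unfolding dotp_def using nm_mv by (intro sum.cong refl) auto
    also have "\<dots> = dotp n (v l) (proj n k v (mv n s (proj n k v x))) + c * (dotp n (v l) x - dotp n (v l) (proj n k v x))"
      unfolding dotp_def by (simp add: distrib_left sum.distrib sum_distrib_left right_diff_distrib sum_subtractf mult_ac)
    also have "\<dots> = c * dotp n (v l) x" using dproj[OF l] by simp
    finally have "c * dotp n (v l) x = e * dotp n (v l) x" using 1 by linarith
    hence "(c - e) * dotp n (v l) x = 0" by (simp add: left_diff_distrib)
    thus ?thesis using ec by simp
  qed
  have px: "proj n k v x = x" using proj_id[of k n v x] orth by auto
  have sx_orth: "dotp n (v l) (mv n s x) = 0" if l: "l < k" for l
  proof -
    have "dotp n (v l) (mv n s x) = dotp n (mv n s (v l)) x" by (rule dotp_sym_mv[OF sym])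
    also have "\<dots> = d l * dotp n (v l) x"
      unfolding dotp_def using eig l by (simp add: sum_distrib_left mult_ac)
    finally show ?thesis using orth[OF l] by simp
  qed
  have sx: "mv n s x i = e * x i" if i: "i < n" for i
  proof -
    have "mv n nm x i = proj n k v (mv n s x) i" using nm_mv[OF i] px by simp
    also have "\<dots> = mv n s x i" using proj_id[of k n v "mv n s x"] sx_orth by auto
    finally show ?thesis using ex i by simp
  qed
  obtain i0 where i0: "i0 < n" "x i0 \<noteq> 0" using xnz by blast
  have xx: "dotp n x x > 0" unfolding dotp_def
  proof -
    have "0 < x i0 * x i0" using i0(2) by (metis not_real_square_gt_zero)
    thus "0 < (\<Sum>i<n. x i * x i)"
      using sum_pos2[of "{..<n}" i0 "\<lambda>i. x i * x i"] i0 by simp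
  qed
  define r where "r = sqrt (dotp n x x)"
  have r: "r > 0" "r * r = dotp n x x" unfolding r_def using xx by auto
  define y where "y = (\<lambda>i. x i / r)"
  have "dotp n y y = dotp n x x / (r * r)" unfolding y_def dotp_def
    by (simp add: sum_divide_distrib)
  hence yy: "dotp n y y = 1" using r xx by simp
  have yo: "\<forall>l<k. dotp n (v l) y = 0" unfolding y_def using orth
    unfolding dotp_def by (simp add: sum_divide_distrib[symmetric])
  have ys: "\<forall>i<n. mv n s y i = e * y i" unfolding y_def using sx
    unfolding mv_def by (simp add: sum_divide_distrib[symmetric])
  show ?thesis using yy yo ys by (intro exI[of _ y] exI[of _ e]) auto
qed

lemma spectral_fun:
  assumes sym: "symf n s"
  shows "\<exists>v d. orthn n n v \<and> (\<forall>l<n. \<forall>i<n. mv n s (v l) i = d l * v l i)"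
proof -
  have "\<exists>v d. orthn n k v \<and> (\<forall>l<k. \<forall>i<n. mv n s (v l) i = d l * v l i)" if "k \<le> n" for k
    using that
  proof (induction k)
    case 0 thus ?case unfolding orthn_def by auto
  next
    case (Suc k)
    then obtain v d where o: "orthn n k v" and eig: "\<forall>l<k. \<forall>i<n. mv n s (v l) i = d l * v l i" by auto
    from crux[OF sym _ o eig] Suc(2) obtain x e where
      x: "dotp n x x = 1" "\<forall>l<k. dotp n (v l) x = 0" "\<forall>i<n. mv n s x i = e * x i" by auto
    define v' where "v' = v(k := x)"
    define d' where "d' = d(k := e)"
    have "orthn n (Suc k) v'" unfolding orthn_def
    proof (intro allI impI)
      fix l l' assume l: "l < Suc k" and l': "l' < Suc k"
      show "dotp n (v' l) (v' l') = (if l = l' then 1 else 0)"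
        using o x l l' unfolding v'_def orthn_def
        by (cases "l = k"; cases "l' = k") (auto simp: less_Suc_eq dotp_comm)
    qed
    moreover have "\<forall>l<Suc k. \<forall>i<n. mv n s (v' l) i = d' l * v' l i"
      using eig x unfolding v'_def d'_def by (auto simp: less_Suc_eq)
    ultimately show ?case by blast
  qed
  thus ?thesis by blast
qed


lemma orthn_complete:
  assumes o: "orthn n n v" and i: "i < n" and j: "j < n"
  shows "(\<Sum>l<n. v l i * v l j) = (if i = j then 1 else 0)"
proof -
  define V where "V = mat n n (\<lambda>(i,j). v j i)"
  have Vc: "V \<in> carrier_mat n n" "transpose_mat V \<in> carrier_mat n n" by (auto simp: V_def)
  have "transpose_mat V * V = 1\<^sub>m n"
  proof (rule eq_matI)
    fix a b assume a: "a < dim_row (1\<^sub>m n)" and b: "b < dim_col (1\<^sub>m n)"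
    have "(transpose_mat V * V) $$ (a,b) = dotp n (v a) (v b)"
      using a b by (simp add: V_def scalar_prod_def dotp_def atLeast0LessThan)
    also have "\<dots> = 1\<^sub>m n $$ (a,b)" using o a b unfolding orthn_def by auto
    finally show "(transpose_mat V * V) $$ (a,b) = 1\<^sub>m n $$ (a,b)" .
  qed (auto simp: V_def)
  hence "V * transpose_mat V = 1\<^sub>m n" using mat_mult_left_right_inverse[OF Vc(2) Vc(1)] by simp
  hence "(V * transpose_mat V) $$ (i,j) = 1\<^sub>m n $$ (i,j)" by simp
  thus ?thesis using i j by (simp add: V_def scalar_prod_def atLeast0LessThan)
qed

lemma orthn_expand:
  assumes o: "orthn n n v" and i: "i < n"
  shows "x i = (\<Sum>l<n. dotp n (v l) x * v l i)"
proof -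
  have "(\<Sum>l<n. dotp n (v l) x * v l i) = (\<Sum>l<n. \<Sum>j<n. v l i * v l j * x j)"
    unfolding dotp_def by (simp add: sum_distrib_left sum_distrib_right mult_ac)
  also have "\<dots> = (\<Sum>j<n. \<Sum>l<n. v l i * v l j * x j)" by (rule sum.swap)
  also have "\<dots> = (\<Sum>j<n. (\<Sum>l<n. v l i * v l j) * x j)" by (simp add: sum_distrib_right)
  also have "\<dots> = (\<Sum>j<n. if i = j then x j else 0)"
    using orthn_complete[OF o i] by (intro sum.cong refl) auto
  also have "\<dots> = x i" using i by simp
  finally show ?thesis by simp
qed

lemma dotp_cong:
  assumes "\<forall>i<n. x i = x' i" "\<forall>i<n. y i = y' i"
  shows "dotp n x y = dotp n x' y'"
  unfolding dotp_def using assms by (intro sum.cong refl) auto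

lemma dotp_combo:
  assumes o: "orthn n n v"
  shows "dotp n (\<lambda>i. \<Sum>l<n. a l * v l i) (\<lambda>i. \<Sum>l<n. b l * v l i) = (\<Sum>l<n. a l * b l)"
proof -
  have "dotp n (\<lambda>i. \<Sum>l<n. a l * v l i) (\<lambda>i. \<Sum>l<n. b l * v l i)
      = (\<Sum>i<n. \<Sum>l<n. \<Sum>l'<n. a l * b l' * (v l i * v l' i))"
    unfolding dotp_def sum_product by (simp add: mult_ac)
  also have "\<dots> = (\<Sum>l<n. \<Sum>i<n. \<Sum>l'<n. a l * b l' * (v l i * v l' i))" by (rule sum.swap)
  also have "\<dots> = (\<Sum>l<n. \<Sum>l'<n. \<Sum>i<n. a l * b l' * (v l i * v l' i))"
    by (rule sum.cong[OF refl], rule sum.swap)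
  also have "\<dots> = (\<Sum>l<n. \<Sum>l'<n. a l * b l' * dotp n (v l) (v l'))"
    unfolding dotp_def by (simp add: sum_distrib_left)
  also have "\<dots> = (\<Sum>l<n. \<Sum>l'<n. if l = l' then a l * b l' else 0)"
    using o unfolding orthn_def by (intro sum.cong refl) auto
  also have "\<dots> = (\<Sum>l<n. a l * b l)" by simp
  finally show ?thesis .
qed

lemma mv_expand:
  assumes o: "orthn n n v" and eig: "\<forall>l<n. \<forall>i<n. mv n s (v l) i = d l * v l i" and i: "i < n"
  shows "mv n s x i = (\<Sum>l<n. (d l * dotp n (v l) x) * v l i)"
proof -
  have "mv n s x i = (\<Sum>j<n. s i j * (\<Sum>l<n. dotp n (v l) x * v l j))"
    unfolding mv_def using orthn_expand[OF o] by (intro sum.cong refl) auto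
  also have "\<dots> = (\<Sum>l<n. \<Sum>j<n. s i j * (dotp n (v l) x * v l j))" by (rule sum_swap_l)
  also have "\<dots> = (\<Sum>l<n. dotp n (v l) x * mv n s (v l) i)"
    unfolding mv_def by (simp add: sum_distrib_left mult_ac)
  also have "\<dots> = (\<Sum>l<n. (d l * dotp n (v l) x) * v l i)"
    using eig i by (intro sum.cong refl) auto
  finally show ?thesis .
qed

lemma rayleigh_forms:
  assumes o: "orthn n n v" and eig: "\<forall>l<n. \<forall>i<n. mv n s (v l) i = d l * v l i"
  shows "dotp n x x = (\<Sum>l<n. (dotp n (v l) x)\<^sup>2)"
    and "dotp n x (mv n s x) = (\<Sum>l<n. d l * (dotp n (v l) x)\<^sup>2)"
    and "dotp n (mv n s x) (mv n s x) = (\<Sum>l<n. (d l)\<^sup>2 * (dotp n (v l) x)\<^sup>2)"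
proof -
  define X where "X = (\<lambda>i. \<Sum>l<n. dotp n (v l) x * v l i)"
  define SX where "SX = (\<lambda>i. \<Sum>l<n. (d l * dotp n (v l) x) * v l i)"
  have xX: "\<forall>i<n. x i = X i" unfolding X_def using orthn_expand[OF o] by auto
  have sX: "\<forall>i<n. mv n s x i = SX i" unfolding SX_def using mv_expand[OF o eig] by auto
  have "dotp n x x = dotp n X X" by (rule dotp_cong[OF xX xX])
  thus "dotp n x x = (\<Sum>l<n. (dotp n (v l) x)\<^sup>2)"
    unfolding X_def dotp_combo[OF o] by (simp add: power2_eq_square)
  have "dotp n x (mv n s x) = dotp n X SX" by (rule dotp_cong[OF xX sX])
  thus "dotp n x (mv n s x) = (\<Sum>l<n. d l * (dotp n (v l) x)\<^sup>2)"
    unfolding X_def SX_def dotp_combo[OF o] by (simp add: power2_eq_square mult_ac)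
  have "dotp n (mv n s x) (mv n s x) = dotp n SX SX" by (rule dotp_cong[OF sX sX])
  thus "dotp n (mv n s x) (mv n s x) = (\<Sum>l<n. (d l)\<^sup>2 * (dotp n (v l) x)\<^sup>2)"
    unfolding SX_def dotp_combo[OF o] by (simp add: power2_eq_square mult_ac)
qed

lemma char_poly_sym:
  assumes o: "orthn n n v" and eig: "\<forall>l<n. \<forall>i<n. mv n s (v l) i = d l * v l i"
  shows "char_poly (mat n n (\<lambda>(i,j). s i j)) = (\<Prod>a\<leftarrow>map d [0..<n]. [:- a, 1:])"
proof -
  define S where "S = mat n n (\<lambda>(i,j). s i j)"
  define V where "V = mat n n (\<lambda>(i,j). v j i)"
  define D where "D = mat n n (\<lambda>(i,j). if i = j then d i else 0)"
  have c: "S \<in> carrier_mat n n" "V \<in> carrier_mat n n" "D \<in> carrier_mat n n"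
    "transpose_mat V \<in> carrier_mat n n" by (auto simp: S_def V_def D_def)
  have VVt: "V * transpose_mat V = 1\<^sub>m n"
  proof (rule eq_matI)
    fix a b assume a: "a < dim_row (1\<^sub>m n)" and b: "b < dim_col (1\<^sub>m n)"
    show "(V * transpose_mat V) $$ (a,b) = 1\<^sub>m n $$ (a,b)"
      using a b orthn_complete[OF o, of a b] by (simp add: V_def scalar_prod_def atLeast0LessThan)
  qed (auto simp: V_def)
  have VtV: "transpose_mat V * V = 1\<^sub>m n" using mat_mult_left_right_inverse[OF c(2) c(4) VVt] .
  have SV: "S * V = V * D"
  proof (rule eq_matI)
    fix a b assume a: "a < dim_row (V * D)" and b: "b < dim_col (V * D)"
    hence a': "a < n" and b': "b < n" by (auto simp: V_def D_def)
    have "(S * V) $$ (a,b) = mv n s (v b) a"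
      using a' b' by (simp add: S_def V_def scalar_prod_def mv_def atLeast0LessThan)
    also have "\<dots> = d b * v b a" using eig a' b' by auto
    also have "\<dots> = (V * D) $$ (a,b)"
      using a' b' by (simp add: V_def D_def scalar_prod_def atLeast0LessThan if_distrib cong: if_cong)
    finally show "(S * V) $$ (a,b) = (V * D) $$ (a,b)" .
  qed (auto simp: S_def V_def D_def)
  have "S = S * (V * transpose_mat V)" using c VVt by simp
  also have "\<dots> = (S * V) * transpose_mat V" using c by (simp add: assoc_mult_mat)
  also have "\<dots> = V * D * transpose_mat V" unfolding SV ..
  finally have "similar_mat S D"
    using c VVt VtV by (intro similar_matI[of S D V "transpose_mat V" n]) auto
  hence "char_poly S = char_poly D" by (rule char_poly_similar)
  also have "\<dots> = (\<Prod>a\<leftarrow>diag_mat D. [:- a, 1:])"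
    by (rule char_poly_upper_triangular[OF c(3)]) (auto simp: D_def upper_triangular_def)
  also have "diag_mat D = map d [0..<n]" by (simp add: diag_mat_def D_def)
  finally show ?thesis unfolding S_def .
qed

lemma proots_linear_prod: "proots (\<Prod>a\<leftarrow>xs. [:- a, 1:]) = mset (xs :: real list)"
proof (induction xs)
  case Nil thus ?case by simp
next
  case (Cons a xs)
  have nz: "(\<Prod>a\<leftarrow>xs. [:- a, 1:]) \<noteq> (0::real poly)"
    by (auto simp: prod_list_zero_iff)
  have "proots (\<Prod>a\<leftarrow>a # xs. [:- a, 1:]) = proots ([:- a, 1:] * (\<Prod>a\<leftarrow>xs. [:- a, 1:]))"
    by simp
  also have "\<dots> = proots [:- a, 1:] + proots (\<Prod>a\<leftarrow>xs. [:- a, 1:])"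
    by (rule proots_mult) (use nz in auto)
  also have "\<dots> = mset (a # xs)" using Cons by (simp del: pCons_eq_iff)
  finally show ?case .
qed

lemma eig_list_sym:
  assumes o: "orthn n n v" and eig: "\<forall>l<n. \<forall>i<n. mv n s (v l) i = d l * v l i"
    and nn: "\<forall>l<n. d l \<ge> 0"
  shows "eig_list (mat n n (\<lambda>(i,j). s i j)) = sort (map d [0..<n])"
proof -
  have "eig_list (mat n n (\<lambda>(i,j). s i j)) = sort_key abs (sort (map d [0..<n]))"
    unfolding eig_list_def char_poly_sym[OF o eig] proots_linear_prod sorted_list_of_multiset_mset ..
  also have "\<dots> = sort (map d [0..<n])"
  proof (rule sort_key_id_if_sorted)
    have "map abs (sort (map d [0..<n])) = sort (map d [0..<n])"
      using nn by (intro map_idI) auto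
    thus "sorted (map abs (sort (map d [0..<n])))" by simp
  qed
  finally show ?thesis .
qed


lemma sorted_first_two:
  fixes d :: "nat \<Rightarrow> real"
  assumes n2: "n \<ge> 2" and es: "es = sort (map d [0..<n])"
  shows "\<exists>i<n. es!0 = d i \<and> (\<forall>l<n. es!0 \<le> d l) \<and> (\<forall>l<n. l \<noteq> i \<longrightarrow> es!1 \<le> d l)
           \<and> (\<exists>j<n. j \<noteq> i \<and> es!1 = d j)"
proof -
  have len: "length es = n" using es by simp
  have so: "sorted es" using es by simp
  have ms: "mset es = image_mset d (mset_set {0..<n})" using es by (simp add: mset_map mset_upt)
  obtain e0 e1 rest where ee: "es = e0 # e1 # rest"
    using len n2 by (cases es; cases "tl es") auto
  have "e0 \<in># mset es" using ee by simp
  then obtain i where i: "i \<in> {0..<n}" "e0 = d i" unfolding ms by auto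
  have "mset_set {0..<n} = add_mset i (mset_set ({0..<n} - {i}))"
    using i by (simp add: mset_set.remove)
  hence "mset es = add_mset (d i) (image_mset d (mset_set ({0..<n} - {i})))" unfolding ms by simp
  hence mr: "mset (e1 # rest) = image_mset d (mset_set ({0..<n} - {i}))" using ee i by simp
  hence sr: "set (e1 # rest) = d ` ({0..<n} - {i})"
    by (metis finite_atLeastLessThan finite_Diff finite_set_mset_mset_set set_image_mset set_mset_mset)
  have so2: "\<forall>x\<in>set rest. e1 \<le> x" and e01: "e0 \<le> e1" and so0: "\<forall>x\<in>set rest. e0 \<le> x"
    using so ee by auto
  show ?thesis
  proof (rule exI[of _ i], intro conjI allI impI)
    show "i < n" using i by simp
    show "es!0 = d i" using ee i by simp
    fix l assume l: "l < n"
    have "d l \<in> set es" unfolding es using l by simp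
    thus "es!0 \<le> d l" using ee e01 so0 by auto
  next
    fix l assume l: "l < n" "l \<noteq> i"
    hence "d l \<in> set (e1 # rest)" unfolding sr by auto
    thus "es!1 \<le> d l" using ee so2 by auto
  next
    have "e1 \<in> d ` ({0..<n} - {i})" using sr[symmetric] by auto
    then obtain j where "j \<in> {0..<n} - {i}" "e1 = d j" by blast
    thus "\<exists>j<n. j \<noteq> i \<and> es!1 = d j" using ee by (intro exI[of _ j]) auto
  qed
qed

lemma sorted_last:
  fixes d :: "nat \<Rightarrow> real"
  assumes n: "n > 0" and es: "es = sort (map d [0..<n])"
  shows "\<forall>l<n. d l \<le> last es"
proof (intro allI impI)
  fix l assume l: "l < n"
  have len: "length es = n" using es by simp
  have so: "sorted es" using es by simp
  have "d l \<in> set es" unfolding es using l by simp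
  then obtain p where p: "p < n" "es ! p = d l" using len by (auto simp: in_set_conv_nth)
  have "es ! p \<le> es ! (n - 1)" using so p len by (intro sorted_nth_mono) auto
  also have "es ! (n - 1) = last es" using len n by (subst last_conv_nth) auto
  finally show "d l \<le> last es" using p by simp
qed

lemma sym_facts:
  assumes sym: "symf n s" and n2: "n \<ge> 2" and psd: "\<forall>x. dotp n x (mv n s x) \<ge> 0"
  defines "es \<equiv> eig_list (mat n n (\<lambda>(i,j). s i j))"
  shows "es!1 \<ge> 0"
    and "\<forall>x. dotp n x (mv n s x) \<le> last es * dotp n x x"
    and "\<forall>x. dotp n (mv n s x) (mv n s x) \<le> last es * dotp n x (mv n s x)"
    and "\<forall>x1 x2. \<exists>a b. (a \<noteq> 0 \<or> b \<noteq> 0) \<and>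
           es!1 * dotp n (\<lambda>i. a * x1 i + b * x2 i) (\<lambda>i. a * x1 i + b * x2 i)
             \<le> dotp n (\<lambda>i. a * x1 i + b * x2 i) (mv n s (\<lambda>i. a * x1 i + b * x2 i)) \<and>
           es!1 * dotp n (\<lambda>i. a * x1 i + b * x2 i) (mv n s (\<lambda>i. a * x1 i + b * x2 i))
             \<le> dotp n (mv n s (\<lambda>i. a * x1 i + b * x2 i)) (mv n s (\<lambda>i. a * x1 i + b * x2 i))"
    and "es!1 = 0 \<Longrightarrow> \<exists>y1 y2. dotp n y1 y1 = 1 \<and> dotp n y2 y2 = 1 \<and> dotp n y1 y2 = 0
           \<and> (\<forall>i<n. mv n s y1 i = 0) \<and> (\<forall>i<n. mv n s y2 i = 0)"
    and "\<exists>x. dotp n x x = 1 \<and> dotp n x (mv n s x) = last es"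
proof -
  obtain v d where o: "orthn n n v" and eig: "\<forall>l<n. \<forall>i<n. mv n s (v l) i = d l * v l i"
    using spectral_fun[OF sym] by blast
  have dv: "dotp n (v l) (mv n s (v l)) = d l" if l: "l < n" for l
  proof -
    have "dotp n (v l) (mv n s (v l)) = dotp n (v l) (\<lambda>i. d l * v l i)"
      by (rule dotp_cong) (use eig l in auto)
    also have "\<dots> = d l * dotp n (v l) (v l)" unfolding dotp_def by (simp add: sum_distrib_left mult_ac)
    also have "\<dots> = d l" using o l unfolding orthn_def by simp
    finally show ?thesis .
  qed
  have dnn: "\<forall>l<n. d l \<ge> 0" using dv psd by metis
  have esd: "es = sort (map d [0..<n])" unfolding es_def by (rule eig_list_sym[OF o eig dnn])
  obtain i where i: "i < n" "es!0 = d i" and e0le: "\<forall>l<n. es!0 \<le> d l"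
    and e1le: "\<forall>l<n. l \<noteq> i \<longrightarrow> es!1 \<le> d l" and j: "\<exists>j<n. j \<noteq> i \<and> es!1 = d j"
    using sorted_first_two[OF n2 esd] by blast
  have lst: "\<forall>l<n. d l \<le> last es" using sorted_last[OF _ esd] n2 by simp
  note rf = rayleigh_forms[OF o eig]
  show "es!1 \<ge> 0" using j dnn by auto
  show "\<forall>x. dotp n x (mv n s x) \<le> last es * dotp n x x"
  proof
    fix x
    have "(\<Sum>l<n. d l * (dotp n (v l) x)\<^sup>2) \<le> (\<Sum>l<n. last es * (dotp n (v l) x)\<^sup>2)"
      using lst by (intro sum_mono mult_right_mono) auto
    thus "dotp n x (mv n s x) \<le> last es * dotp n x x" unfolding rf by (simp add: sum_distrib_left)
  qed
  show "\<forall>x. dotp n (mv n s x) (mv n s x) \<le> last es * dotp n x (mv n s x)"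
  proof
    fix x
    have "(\<Sum>l<n. (d l)\<^sup>2 * (dotp n (v l) x)\<^sup>2) \<le> (\<Sum>l<n. last es * (d l * (dotp n (v l) x)\<^sup>2))"
    proof (intro sum_mono)
      fix l assume "l \<in> {..<n}"
      hence "d l \<le> last es" "0 \<le> d l" using lst dnn by auto
      hence "d l * d l \<le> last es * d l" by (intro mult_right_mono) auto
      hence "d l * d l * (dotp n (v l) x)\<^sup>2 \<le> last es * d l * (dotp n (v l) x)\<^sup>2"
        by (rule mult_right_mono) simp
      thus "(d l)\<^sup>2 * (dotp n (v l) x)\<^sup>2 \<le> last es * (d l * (dotp n (v l) x)\<^sup>2)"
        by (simp add: power2_eq_square[of "d l"] mult.assoc)
    qed
    thus "dotp n (mv n s x) (mv n s x) \<le> last es * dotp n x (mv n s x)" unfolding rf(3) rf(2) by (simp add: sum_distrib_left)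
  qed
  show "\<forall>x1 x2. \<exists>a b. (a \<noteq> 0 \<or> b \<noteq> 0) \<and>
           es!1 * dotp n (\<lambda>i. a * x1 i + b * x2 i) (\<lambda>i. a * x1 i + b * x2 i)
             \<le> dotp n (\<lambda>i. a * x1 i + b * x2 i) (mv n s (\<lambda>i. a * x1 i + b * x2 i)) \<and>
           es!1 * dotp n (\<lambda>i. a * x1 i + b * x2 i) (mv n s (\<lambda>i. a * x1 i + b * x2 i))
             \<le> dotp n (mv n s (\<lambda>i. a * x1 i + b * x2 i)) (mv n s (\<lambda>i. a * x1 i + b * x2 i))"
  proof (intro allI)
    fix x1 x2 :: "nat \<Rightarrow> real"
    have key: "es!1 * dotp n t t \<le> dotp n t (mv n s t) \<and> es!1 * dotp n t (mv n s t) \<le> dotp n (mv n s t) (mv n s t)"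
      if t0: "dotp n (v i) t = 0" for t
    proof
      have "(\<Sum>l<n. es!1 * (dotp n (v l) t)\<^sup>2) \<le> (\<Sum>l<n. d l * (dotp n (v l) t)\<^sup>2)"
      proof (intro sum_mono)
        fix l assume l: "l \<in> {..<n}"
        show "es!1 * (dotp n (v l) t)\<^sup>2 \<le> d l * (dotp n (v l) t)\<^sup>2"
        proof (cases "l = i")
          case True thus ?thesis using t0 by simp
        next
          case False thus ?thesis using e1le l by (intro mult_right_mono) auto
        qed
      qed
      thus "es!1 * dotp n t t \<le> dotp n t (mv n s t)" unfolding rf by (simp add: sum_distrib_left)
      have "(\<Sum>l<n. es!1 * (d l * (dotp n (v l) t)\<^sup>2)) \<le> (\<Sum>l<n. (d l)\<^sup>2 * (dotp n (v l) t)\<^sup>2)"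
      proof (intro sum_mono)
        fix l assume l: "l \<in> {..<n}"
        show "es!1 * (d l * (dotp n (v l) t)\<^sup>2) \<le> (d l)\<^sup>2 * (dotp n (v l) t)\<^sup>2"
        proof (cases "l = i")
          case True thus ?thesis using t0 by simp
        next
          case False
          hence "es!1 * d l \<le> d l * d l" using e1le l dnn by (intro mult_right_mono) auto
          hence "es!1 * d l * (dotp n (v l) t)\<^sup>2 \<le> d l * d l * (dotp n (v l) t)\<^sup>2"
            by (rule mult_right_mono) simp
          thus ?thesis by (simp add: power2_eq_square[of "d l"] mult.assoc)
        qed
      qed
      thus "es!1 * dotp n t (mv n s t) \<le> dotp n (mv n s t) (mv n s t)" unfolding rf(3) rf(2) by (simp add: sum_distrib_left)
    qed
    have lin: "dotp n (v i) (\<lambda>k. a * x1 k + b * x2 k) = a * dotp n (v i) x1 + b * dotp n (v i) x2" for a b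
      unfolding dotp_def by (simp add: distrib_left sum.distrib sum_distrib_left mult_ac)
    show "\<exists>a b. (a \<noteq> 0 \<or> b \<noteq> 0) \<and>
           es!1 * dotp n (\<lambda>i. a * x1 i + b * x2 i) (\<lambda>i. a * x1 i + b * x2 i)
             \<le> dotp n (\<lambda>i. a * x1 i + b * x2 i) (mv n s (\<lambda>i. a * x1 i + b * x2 i)) \<and>
           es!1 * dotp n (\<lambda>i. a * x1 i + b * x2 i) (mv n s (\<lambda>i. a * x1 i + b * x2 i))
             \<le> dotp n (mv n s (\<lambda>i. a * x1 i + b * x2 i)) (mv n s (\<lambda>i. a * x1 i + b * x2 i))"
    proof (cases "dotp n (v i) x2 = 0 \<and> dotp n (v i) x1 = 0")
      case True
      have "dotp n (v i) (\<lambda>k. 1 * x1 k + 0 * x2 k) = 0" unfolding lin using True by simp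
      from key[OF this] show ?thesis by (intro exI[of _ 1] exI[of _ 0]) simp
    next
      case False
      define a where "a = dotp n (v i) x2"
      define b where "b = - dotp n (v i) x1"
      have "dotp n (v i) (\<lambda>k. a * x1 k + b * x2 k) = 0" unfolding lin a_def b_def by (simp add: mult.commute)
      from key[OF this] False show ?thesis unfolding a_def b_def
        by (intro exI[of _ "dotp n (v i) x2"] exI[of _ "- dotp n (v i) x1"]) auto
    qed
  qed
  show "es!1 = 0 \<Longrightarrow> \<exists>y1 y2. dotp n y1 y1 = 1 \<and> dotp n y2 y2 = 1 \<and> dotp n y1 y2 = 0
           \<and> (\<forall>i<n. mv n s y1 i = 0) \<and> (\<forall>i<n. mv n s y2 i = 0)"
  proof -
    assume e1: "es!1 = 0"
    obtain j where jj: "j < n" "j \<noteq> i" "es!1 = d j" using j by blast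
    have "es!0 \<le> d j" using e0le jj by auto
    hence di: "d i = 0" using i e1 jj dnn by force
    have dj: "d j = 0" using e1 jj by simp
    show ?thesis
      using o i jj di dj eig unfolding orthn_def
      by (intro exI[of _ "v i"] exI[of _ "v j"]) auto
  qed
  show "\<exists>x. dotp n x x = 1 \<and> dotp n x (mv n s x) = last es"
  proof -
    have "length es = n" using esd by simp
    hence "es \<noteq> []" using n2 by auto
    hence "last es \<in> set es" by simp
    then obtain j where j: "j < n" "last es = d j" unfolding esd by auto
    thus ?thesis using dv[OF j(1)] o unfolding orthn_def by (intro exI[of _ "v j"]) auto
  qed
qed



lemma cs_sum:
  fixes a b :: "nat \<Rightarrow> real"
  shows "(\<Sum>i<n. a i * b i)\<^sup>2 \<le> (\<Sum>i<n. (a i)\<^sup>2) * (\<Sum>i<n. (b i)\<^sup>2)"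
proof -
  have t: "(a i * b j - a j * b i)\<^sup>2 = (a i)\<^sup>2 * (b j)\<^sup>2 + (a j)\<^sup>2 * (b i)\<^sup>2 - 2 * ((a i * b i) * (a j * b j))" for i j
    by (simp add: power2_eq_square algebra_simps)
  have "0 \<le> (\<Sum>i<n. \<Sum>j<n. (a i * b j - a j * b i)\<^sup>2)" by (intro sum_nonneg) auto
  also have "\<dots> = (\<Sum>i<n. \<Sum>j<n. (a i)\<^sup>2 * (b j)\<^sup>2) + (\<Sum>i<n. \<Sum>j<n. (b i)\<^sup>2 * (a j)\<^sup>2)
      - 2 * (\<Sum>i<n. \<Sum>j<n. (a i * b i) * (a j * b j))"
    unfolding t by (simp add: sum.distrib sum_subtractf sum_distrib_left mult.commute)
  also have "(\<Sum>i<n. \<Sum>j<n. (a i)\<^sup>2 * (b j)\<^sup>2) = (\<Sum>i<n. (a i)\<^sup>2) * (\<Sum>i<n. (b i)\<^sup>2)"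
    by (simp add: sum_product)
  also have "(\<Sum>i<n. \<Sum>j<n. (b i)\<^sup>2 * (a j)\<^sup>2) = (\<Sum>i<n. (b i)\<^sup>2) * (\<Sum>i<n. (a i)\<^sup>2)"
    by (simp add: sum_product)
  also have "(\<Sum>i<n. \<Sum>j<n. (a i * b i) * (a j * b j)) = (\<Sum>i<n. a i * b i) * (\<Sum>i<n. a i * b i)"
    by (simp add: sum_product)
  finally show ?thesis by (simp add: power2_eq_square mult.commute)
qed

locale setting =
  fixes n :: nat and g :: "nat \<Rightarrow> nat \<Rightarrow> real" and lam mu :: real and p :: "nat \<Rightarrow> real"
  assumes n2: "n \<ge> 2" and gsym: "\<forall>i<n. \<forall>j<n. g i j = g j i" and gnn: "\<forall>i<n. \<forall>j<n. g i j \<ge> 0"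
    and gdiag: "\<forall>i<n. g i i = 0" and lam: "lam > 0" and mu: "mu > 0"
    and etapos: "\<forall>i<n. (\<Sum>j<n. g i j) > 0"
    and conn: "\<forall>i<n. \<forall>j<n. (i,j) \<in> {(a,b). a < n \<and> b < n \<and> g a b > 0}\<^sup>*"
    and pge: "\<forall>i<n. p i \<ge> lam + mu * (\<Sum>j<n. g i j)"
begin

definition eta where "eta i = (\<Sum>j<n. g i j)"
definition lf where "lf i j = (if i = j then eta i else 0) - g i j"
definition af where "af i j = (if i = j then lam else 0) + mu * lf i j"

lemma ppos: "i < n \<Longrightarrow> p i > 0"
  using pge etapos lam mu by (smt (verit) mult_pos_pos)

lemma pge': "i < n \<Longrightarrow> p i \<ge> lam + mu * eta i"
  using pge unfolding eta_def by auto

lemma lf_sym: "symf n lf"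
  unfolding symf_def lf_def using gsym by auto

lemma af_sym: "symf n af"
  unfolding symf_def af_def using lf_sym unfolding symf_def by auto

lemma mv_lf: "i < n \<Longrightarrow> mv n lf x i = eta i * x i - (\<Sum>j<n. g i j * x j)"
  unfolding mv_def lf_def by (simp add: left_diff_distrib sum_subtractf if_distrib[of "\<lambda>z. z * x _"] cong: if_cong)

lemma mv_af: "i < n \<Longrightarrow> mv n af x i = lam * x i + mu * mv n lf x i"
proof -
  assume i: "i < n"
  have "mv n af x i = (\<Sum>j<n. (if i = j then lam * x j else 0) + mu * (lf i j * x j))"
    unfolding mv_def af_def by (intro sum.cong refl) (simp add: algebra_simps)
  also have "\<dots> = (\<Sum>j<n. (if i = j then lam * x j else 0)) + mu * mv n lf x i"
    unfolding mv_def by (simp add: sum.distrib sum_distrib_left)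
  finally show ?thesis using i by simp
qed

lemma sum_g_swap: "(\<Sum>i<n. \<Sum>j<n. g i j * f j) = (\<Sum>i<n. \<Sum>j<n. g i j * f i)"
proof -
  have "(\<Sum>i<n. \<Sum>j<n. g i j * f j) = (\<Sum>j<n. \<Sum>i<n. g i j * f j)" by (rule sum.swap)
  also have "\<dots> = (\<Sum>j<n. \<Sum>i<n. g j i * f j)" using gsym by (intro sum.cong refl) auto
  finally show ?thesis .
qed

lemma expand_sq:
  "(\<Sum>i<n. \<Sum>j<n. g i j * (x i + c * x j)\<^sup>2) = 2 * (\<Sum>i<n. eta i * (x i)\<^sup>2) + 2 * c * (\<Sum>i<n. \<Sum>j<n. g i j * (x i * x j))"
  if c: "c * c = 1" for c
proof -
  have t: "g i j * (x i + c * x j)\<^sup>2 = g i j * (x i)\<^sup>2 + g i j * (x j)\<^sup>2 + 2 * c * (g i j * (x i * x j))" for i j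
    using c by (simp add: power2_eq_square algebra_simps)
  have "(\<Sum>i<n. \<Sum>j<n. g i j * (x i + c * x j)\<^sup>2) = (\<Sum>i<n. \<Sum>j<n. g i j * (x i)\<^sup>2) + (\<Sum>i<n. \<Sum>j<n. g i j * (x j)\<^sup>2) + 2 * c * (\<Sum>i<n. \<Sum>j<n. g i j * (x i * x j))"
    unfolding t by (simp only: sum.distrib sum_distrib_left)
  also have "(\<Sum>i<n. \<Sum>j<n. g i j * (x j)\<^sup>2) = (\<Sum>i<n. \<Sum>j<n. g i j * (x i)\<^sup>2)"
    by (rule sum_g_swap)
  also have "(\<Sum>i<n. \<Sum>j<n. g i j * (x i)\<^sup>2) = (\<Sum>i<n. eta i * (x i)\<^sup>2)"
    unfolding eta_def by (simp add: sum_distrib_right)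
  finally show ?thesis by simp
qed

lemma quad_lf: "dotp n x (mv n lf x) = (\<Sum>i<n. \<Sum>j<n. g i j * (x i - x j)\<^sup>2) / 2"
proof -
  have "dotp n x (mv n lf x) = (\<Sum>i<n. x i * (eta i * x i - (\<Sum>j<n. g i j * x j)))"
    unfolding dotp_def by (intro sum.cong refl) (simp add: mv_lf)
  also have "\<dots> = (\<Sum>i<n. eta i * (x i)\<^sup>2) - (\<Sum>i<n. \<Sum>j<n. g i j * (x i * x j))"
    by (simp add: right_diff_distrib sum_subtractf sum_distrib_left power2_eq_square mult_ac)
  also have "\<dots> = (\<Sum>i<n. \<Sum>j<n. g i j * (x i + (-1) * x j)\<^sup>2) / 2"
    using expand_sq[of "-1" x] by simp
  finally show ?thesis by simp
qed

lemma quad_lf_nn: "dotp n x (mv n lf x) \<ge> 0"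
  unfolding quad_lf using gnn by (intro divide_nonneg_pos sum_nonneg mult_nonneg_nonneg) auto

lemma quad_plus: "(\<Sum>i<n. eta i * (x i)\<^sup>2) + (\<Sum>i<n. \<Sum>j<n. g i j * (x i * x j)) \<ge> 0"
proof -
  have "(\<Sum>i<n. \<Sum>j<n. g i j * (x i + 1 * x j)\<^sup>2) \<ge> 0"
    using gnn by (intro sum_nonneg mult_nonneg_nonneg) auto
  thus ?thesis using expand_sq[of 1 x] by simp
qed

lemma quad_af: "dotp n x (mv n af x) = lam * dotp n x x + mu * dotp n x (mv n lf x)"
  unfolding dotp_def by (simp add: mv_af distrib_left sum.distrib sum_distrib_left mult_ac)

lemma quad_af_pos: "(\<exists>i<n. x i \<noteq> 0) \<Longrightarrow> dotp n x (mv n af x) > 0"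
proof -
  assume "\<exists>i<n. x i \<noteq> 0"
  then obtain i where i: "i < n" "x i \<noteq> 0" by blast
  have "0 < x i * x i" using i(2) by (metis not_real_square_gt_zero)
  hence "dotp n x x > 0" unfolding dotp_def using sum_pos2[of "{..<n}" i "\<lambda>i. x i * x i"] i by simp
  thus ?thesis unfolding quad_af using quad_lf_nn[of x] lam mu
    by (smt (verit) mult_pos_pos mult_nonneg_nonneg)
qed

lemma rowsum_lf: "i < n \<Longrightarrow> (\<Sum>j<n. lf i j) = 0"
  unfolding lf_def eta_def by (simp add: sum_subtractf)

lemma colsum_lf: "j < n \<Longrightarrow> (\<Sum>i<n. lf i j) = 0"
proof -
  assume j: "j < n"
  have "(\<Sum>i<n. lf i j) = (\<Sum>i<n. lf j i)" using lf_sym j unfolding symf_def by (intro sum.cong refl) auto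
  thus ?thesis using rowsum_lf[OF j] by simp
qed

lemma mv_lf_one: "i < n \<Longrightarrow> mv n lf (\<lambda>_. c) i = 0"
  unfolding mv_def using rowsum_lf by (simp add: sum_distrib_right[symmetric])

lemma mv_af_one: "i < n \<Longrightarrow> mv n af (\<lambda>_. c) i = lam * c"
  using mv_af[of i "\<lambda>_. c"] mv_lf_one[of i c] by simp

lemma sum_mv_af: "(\<Sum>i<n. mv n af x i) = lam * (\<Sum>i<n. x i)"
proof -
  have "(\<Sum>i<n. mv n af x i) = (\<Sum>j<n. \<Sum>i<n. af i j * x j)" unfolding mv_def by (rule sum.swap)
  also have "\<dots> = (\<Sum>j<n. (\<Sum>i<n. af i j) * x j)" by (simp add: sum_distrib_right)
  also have "\<dots> = (\<Sum>j<n. lam * x j)"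
  proof (intro sum.cong refl)
    fix j assume j: "j \<in> {..<n}"
    have "(\<Sum>i<n. af i j) = lam + mu * (\<Sum>i<n. lf i j)"
      unfolding af_def using j by (simp add: sum.distrib sum_distrib_left[symmetric])
    thus "(\<Sum>i<n. af i j) * x j = lam * x j" using colsum_lf j by simp
  qed
  finally show ?thesis by (simp add: sum_distrib_left)
qed


definition q where "q i = sqrt (p i)"
definition bf where "bf i j = af i j / (q i * q j)"

lemma qpos: "i < n \<Longrightarrow> q i > 0" unfolding q_def using ppos by simp
lemma qne: "i < n \<Longrightarrow> q i \<noteq> 0" using qpos by (metis less_irrefl)
lemma qq: "i < n \<Longrightarrow> q i * q i = p i" unfolding q_def using ppos by (simp add: less_imp_le)

lemma bf_sym: "symf n bf"
  unfolding symf_def bf_def using af_sym unfolding symf_def by (auto simp: mult.commute)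

lemma mv_bf: "i < n \<Longrightarrow> mv n bf x i = mv n af (\<lambda>j. x j / q j) i / q i"
  unfolding mv_def bf_def by (simp add: sum_divide_distrib mult.commute)

lemma quad_bf: "dotp n x (mv n bf x) = dotp n (\<lambda>j. x j / q j) (mv n af (\<lambda>j. x j / q j))"
  unfolding dotp_def using mv_bf qpos by (intro sum.cong refl) (auto simp: field_simps)

lemma quad_af_nn: "dotp n x (mv n af x) \<ge> 0"
proof -
  have "dotp n x x \<ge> 0" unfolding dotp_def by (intro sum_nonneg) auto
  thus ?thesis unfolding quad_af using quad_lf_nn[of x] lam mu by (simp add: mult_nonneg_nonneg)
qed

lemma bf_psd: "\<forall>x. dotp n x (mv n bf x) \<ge> 0"
  using quad_bf quad_af_nn by simp

lemma quad_lf2: "dotp n x (mv n lf x) = (\<Sum>i<n. eta i * (x i)\<^sup>2) - (\<Sum>i<n. \<Sum>j<n. g i j * (x i * x j))"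
proof -
  have "dotp n x (mv n lf x) = (\<Sum>i<n. x i * (eta i * x i - (\<Sum>j<n. g i j * x j)))"
    unfolding dotp_def by (intro sum.cong refl) (simp add: mv_lf)
  also have "\<dots> = (\<Sum>i<n. eta i * (x i)\<^sup>2) - (\<Sum>i<n. \<Sum>j<n. g i j * (x i * x j))"
    by (simp add: right_diff_distrib sum_subtractf sum_distrib_left power2_eq_square mult_ac)
  finally show ?thesis .
qed

lemma bf_le2: "dotp n x (mv n bf x) \<le> 2 * dotp n x x"
proof -
  define w where "w = (\<lambda>j. x j / q j)"
  have etann: "i < n \<Longrightarrow> eta i \<ge> 0" for i using etapos unfolding eta_def by (simp add: less_imp_le)
  have "dotp n x (mv n bf x) = lam * dotp n w w + mu * ((\<Sum>i<n. eta i * (w i)\<^sup>2) - (\<Sum>i<n. \<Sum>j<n. g i j * (w i * w j)))"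
    unfolding quad_bf w_def[symmetric] quad_af quad_lf2 ..
  also have "\<dots> \<le> lam * dotp n w w + mu * (2 * (\<Sum>i<n. eta i * (w i)\<^sup>2))"
    using quad_plus[of w] mu by (intro add_left_mono mult_left_mono) auto
  also have "\<dots> \<le> 2 * (\<Sum>i<n. p i * (w i)\<^sup>2)"
  proof -
    have "lam * dotp n w w + mu * (2 * (\<Sum>i<n. eta i * (w i)\<^sup>2)) = (\<Sum>i<n. (lam + 2 * mu * eta i) * (w i)\<^sup>2)"
      unfolding dotp_def sum_distrib_left sum.distrib[symmetric]
      by (intro sum.cong refl) (simp add: power2_eq_square algebra_simps)
    also have "\<dots> \<le> (\<Sum>i<n. 2 * p i * (w i)\<^sup>2)"
    proof (intro sum_mono mult_right_mono)
      fix i assume i: "i \<in> {..<n}"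
      show "lam + 2 * mu * eta i \<le> 2 * p i" using pge'[of i] i lam by auto
    qed auto
    finally show ?thesis by (simp add: sum_distrib_left mult_ac)
  qed
  also have "(\<Sum>i<n. p i * (w i)\<^sup>2) = dotp n x x"
    unfolding dotp_def w_def
  proof (intro sum.cong refl)
    fix i assume i: "i \<in> {..<n}"
    hence "p i = q i * q i" using qq by simp
    thus "p i * (x i / q i)\<^sup>2 = x i * x i" using qne[of i] i by (simp add: power2_eq_square field_simps)
  qed
  finally show ?thesis .
qed

definition Cm where "Cm = mat n n (\<lambda>(i,j). af i j / p i)"
definition Bm where "Bm = mat n n (\<lambda>(i,j). bf i j)"
definition Lm where "Lm = mat n n (\<lambda>(i,j). lf i j)"

lemma eig_C_B: "eig_list Cm = eig_list Bm"
proof -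
  define D1 where "D1 = mat n n (\<lambda>(i,j). if i = j then 1 / q i else 0)"
  define D2 where "D2 = mat n n (\<lambda>(i,j). if i = j then q i else (0::real))"
  have c: "Cm \<in> carrier_mat n n" "Bm \<in> carrier_mat n n" "D1 \<in> carrier_mat n n" "D2 \<in> carrier_mat n n"
    by (auto simp: Cm_def Bm_def D1_def D2_def)
  have sumd: "(\<Sum>k<n. (if i = k then f k else 0)) = (if i < n then f i else 0)" for i and f :: "nat \<Rightarrow> real"
    by simp
  have sumd2: "(\<Sum>k<n. h k * (if k = j then f k else 0)) = (if j < n then h j * f j else 0)" for j and f h :: "nat \<Rightarrow> real"
    by (simp add: if_distrib[of "\<lambda>z. h _ * z"] cong: if_cong)
  have D12: "D1 * D2 = 1\<^sub>m n"
    by (rule eq_matI) (auto simp: D1_def D2_def scalar_prod_def atLeast0LessThan if_distrib[of "\<lambda>z. z * _"] qne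
        cong: if_cong)
  have D21: "D2 * D1 = 1\<^sub>m n"
    by (rule eq_matI) (auto simp: D1_def D2_def scalar_prod_def atLeast0LessThan if_distrib[of "\<lambda>z. z * _"] qne
        cong: if_cong)
  have "Cm = D1 * Bm * D2"
  proof (rule eq_matI)
    fix i j assume "i < dim_row (D1 * Bm * D2)" "j < dim_col (D1 * Bm * D2)"
    hence i: "i < n" and j: "j < n" by (auto simp: D1_def D2_def)
    have "(D1 * Bm * D2) $$ (i,j) = (1 / q i) * bf i j * q j"
      using i j c by (simp add: scalar_prod_def atLeast0LessThan D1_def D2_def Bm_def
          if_distrib[of "\<lambda>z. z * _"] if_distrib[of "\<lambda>z. _ * z"] cong: if_cong)
    also have "\<dots> = af i j / p i"
      unfolding bf_def using qpos[OF i] qpos[OF j] qq[OF i] by (simp add: field_simps)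
    finally show "Cm $$ (i,j) = (D1 * Bm * D2) $$ (i,j)" using i j by (simp add: Cm_def)
  qed (auto simp: Cm_def D1_def D2_def)
  hence "similar_mat Cm Bm" using c D12 D21 by (intro similar_matI[of Cm Bm D1 D2 n]) auto
  hence "char_poly Cm = char_poly Bm" by (rule char_poly_similar)
  thus ?thesis unfolding eig_list_def by simp
qed


lemma const_kernel:
  assumes k: "\<forall>i<n. mv n lf x i = 0"
  shows "\<forall>i<n. x i = x 0"
proof -
  have "dotp n x (mv n lf x) = 0" unfolding dotp_def using k by simp
  hence s0: "(\<Sum>i<n. \<Sum>j<n. g i j * (x i - x j)\<^sup>2) = 0" unfolding quad_lf by simp
  have nn: "\<forall>i<n. \<forall>j<n. g i j * (x i - x j)\<^sup>2 \<ge> 0" using gnn by auto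
  have inn: "\<forall>i\<in>{..<n}. 0 \<le> (\<Sum>j<n. g i j * (x i - x j)\<^sup>2)"
    using nn by (auto intro: sum_nonneg)
  have z1: "\<forall>i\<in>{..<n}. (\<Sum>j<n. g i j * (x i - x j)\<^sup>2) = 0"
    using sum_nonneg_eq_0_iff[of "{..<n}" "\<lambda>i. \<Sum>j<n. g i j * (x i - x j)\<^sup>2"] inn s0 by simp
  have z: "g i j * (x i - x j)\<^sup>2 = 0" if i: "i < n" and j: "j < n" for i j
  proof -
    have "(\<Sum>j<n. g i j * (x i - x j)\<^sup>2) = 0" using z1 i by simp
    moreover have "\<forall>j\<in>{..<n}. 0 \<le> g i j * (x i - x j)\<^sup>2" using nn i by simp
    ultimately show ?thesis using sum_nonneg_eq_0_iff[of "{..<n}" "\<lambda>j. g i j * (x i - x j)\<^sup>2"] j by simp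
  qed
  have stp: "x a = x b" if "(a,b) \<in> {(a,b). a < n \<and> b < n \<and> g a b > 0}" for a b
  proof -
    have ab: "g a b > 0" "a < n" "b < n" using that by auto
    hence "g a b * (x a - x b)\<^sup>2 = 0" using z by blast
    thus ?thesis using ab by simp
  qed
  have "x 0 = x i" if i: "i < n" for i
  proof -
    have "(0, i) \<in> {(a,b). a < n \<and> b < n \<and> g a b > 0}\<^sup>*" using conn i n2 by auto
    thus ?thesis
    proof (induction rule: rtrancl_induct)
      case base thus ?case by simp
    next
      case (step y z) thus ?case using stp by simp
    qed
  qed
  thus ?thesis by simp
qed

lemma lf_psd: "\<forall>x. dotp n x (mv n lf x) \<ge> 0" using quad_lf_nn by simp

lemma aL_pos: "eig_list Lm ! 1 > 0"
proof -
  note sf = sym_facts[OF lf_sym n2 lf_psd, folded Lm_def]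
  have "eig_list Lm ! 1 \<noteq> 0"
  proof
    assume "eig_list Lm ! 1 = 0"
    from sf(5)[OF this] obtain y1 y2 where y: "dotp n y1 y1 = 1" "dotp n y2 y2 = 1" "dotp n y1 y2 = 0"
      "\<forall>i<n. mv n lf y1 i = 0" "\<forall>i<n. mv n lf y2 i = 0" by blast
    have c1: "\<forall>i<n. y1 i = y1 0" using const_kernel y(4) by blast
    have c2: "\<forall>i<n. y2 i = y2 0" using const_kernel y(5) by blast
    have "dotp n y1 y1 = (\<Sum>i<n. y1 0 * y1 0)" unfolding dotp_def
      by (rule sum.cong) (metis c1 lessThan_iff, metis c1 lessThan_iff)
    hence a: "y1 0 \<noteq> 0" using y by auto
    have "dotp n y2 y2 = (\<Sum>i<n. y2 0 * y2 0)" unfolding dotp_def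
      by (rule sum.cong) (metis c2 lessThan_iff, metis c2 lessThan_iff)
    hence b: "y2 0 \<noteq> 0" using y by auto
    have "dotp n y1 y2 = (\<Sum>i<n. y1 0 * y2 0)" unfolding dotp_def
      by (rule sum.cong) (simp, metis c1 c2 lessThan_iff)
    hence "dotp n y1 y2 = real n * (y1 0 * y2 0)" by simp
    thus False using y a b n2 by simp
  qed
  thus ?thesis using sf(1) by simp
qed

definition mineta where "mineta = Min (eta ` {..<n})"

lemma mineta: "mineta > 0" "\<forall>i<n. mineta \<le> eta i" "\<exists>i<n. mineta = eta i"
proof -
  have "0 \<in> {..<n}" using n2 by simp
  hence ne: "eta ` {..<n} \<noteq> {}" by blast
  have "mineta \<in> eta ` {..<n}" unfolding mineta_def using ne by (intro Min_in) auto
  thus "\<exists>i<n. mineta = eta i" by auto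
  thus "mineta > 0" using etapos unfolding eta_def by auto
  show "\<forall>i<n. mineta \<le> eta i" unfolding mineta_def by auto
qed


lemma mv_cong: "(\<forall>j<n. x j = x' j) \<Longrightarrow> mv n s x i = mv n s x' i"
  unfolding mv_def by (intro sum.cong refl) auto

lemma mv_lin: "mv n s (\<lambda>j. a * x j + b * x' j) i = a * mv n s x i + b * mv n s x' i"
  unfolding mv_def by (simp add: distrib_left sum.distrib sum_distrib_left mult_ac)

lemma dotp_unit: "i0 < n \<Longrightarrow> dotp n (\<lambda>i. if i = i0 then 1 else 0) x = x i0"
  unfolding dotp_def by (simp add: if_distrib[of "\<lambda>z. z * _"] cong: if_cong)

lemma mv_unit: "i < n \<Longrightarrow> i0 < n \<Longrightarrow> mv n s (\<lambda>i. if i = i0 then 1 else 0) i = s i i0"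
  unfolding mv_def by (simp add: if_distrib[of "\<lambda>z. _ * z"] cong: if_cong)

lemma sq_div_expand: "(pp::real) \<noteq> 0 \<Longrightarrow> (a * z + b * l)\<^sup>2 / pp = a\<^sup>2 * (z\<^sup>2 / pp) + 2 * a * b * l * (z / pp) + b\<^sup>2 * l\<^sup>2 * (1 / pp)"
  by (simp add: field_simps power2_eq_square)

lemma four_le_sq: "4 * (P1::real) * P2 \<le> (P1 + P2)\<^sup>2"
proof -
  have "(P1 + P2)\<^sup>2 - 4 * P1 * P2 = (P1 - P2)\<^sup>2" by (simp add: power2_eq_square algebra_simps)
  thus ?thesis using zero_le_power2[of "P1 - P2"] by linarith
qed

lemma sum_four: "(\<Sum>i<n. (a * y i + b) * (a * z i + b * l)) =
   a\<^sup>2 * (\<Sum>i<n. y i * z i) + a * b * l * (\<Sum>i<n. y i) + a * b * (\<Sum>i<n. z i) + real n * (b\<^sup>2 * l)"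
proof -
  have t: "(a * y i + b) * (a * z i + b * l) = a\<^sup>2 * (y i * z i) + a * b * l * y i + a * b * z i + b\<^sup>2 * l" for i
    by (simp add: power2_eq_square algebra_simps)
  show ?thesis unfolding t by (simp add: sum.distrib sum_distrib_left)
qed

theorem core_real:
  assumes ynz: "\<exists>i<n. y i \<noteq> 0" and ysum: "(\<Sum>i<n. y i) = 0"
    and ev: "\<forall>i<n. mv n af y i = p i * (\<beta> + \<theta> * y i)"
  shows "\<theta> > 0" "\<theta> \<le> last (eig_list Cm)" "eig_list Cm ! 1 - lam / (lam + mu * mineta) \<le> \<theta>" "\<theta> \<le> 2"
        "\<theta> \<le> real n / (real n - 1) * (last (eig_list Lm) / (eig_list Lm ! 1))"
proof -
  define z where "z = mv n af y"
  define Y where "Y = dotp n y z"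
  define N where "N = (\<Sum>i<n. (z i)\<^sup>2 / p i)"
  have Ypos: "Y > 0" unfolding Y_def z_def using quad_af_pos[OF ynz] .
  have zsum: "(\<Sum>i<n. z i) = 0" unfolding z_def sum_mv_af ysum by simp
  have NY: "N = \<theta> * Y"
  proof -
    have "N = (\<Sum>i<n. z i * (\<beta> + \<theta> * y i))"
      unfolding N_def
    proof (intro sum.cong refl)
      fix i assume i: "i \<in> {..<n}"
      hence "z i = p i * (\<beta> + \<theta> * y i)" "p i > 0" using ev ppos unfolding z_def by auto
      thus "(z i)\<^sup>2 / p i = z i * (\<beta> + \<theta> * y i)" by (simp add: power2_eq_square)
    qed
    also have "\<dots> = \<beta> * (\<Sum>i<n. z i) + \<theta> * (\<Sum>i<n. y i * z i)"
      by (simp add: distrib_left sum.distrib sum_distrib_left mult_ac)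
    finally show ?thesis unfolding Y_def dotp_def zsum by simp
  qed
  have Npos: "N > 0"
  proof -
    have "\<exists>i<n. z i \<noteq> 0"
    proof (rule ccontr)
      assume "\<not> ?thesis"
      hence "Y = 0" unfolding Y_def dotp_def by simp
      thus False using Ypos by simp
    qed
    then obtain i where i: "i < n" "z i \<noteq> 0" by blast
    have "(z i)\<^sup>2 / p i > 0" using i ppos[OF i(1)] by simp
    moreover have "\<forall>k\<in>{..<n}. (z k)\<^sup>2 / p k \<ge> 0" using ppos by (simp add: less_imp_le)
    ultimately show ?thesis unfolding N_def
      using sum_pos2[of "{..<n}" i "\<lambda>k. (z k)\<^sup>2 / p k"] i by auto
  qed
  show thpos: "\<theta> > 0" using NY Npos Ypos by (simp add: zero_less_mult_iff)
  define u where "u = (\<lambda>i. q i * y i)"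
  have uq: "\<forall>j<n. u j / q j = y j" unfolding u_def using qne by simp
  have Bu: "mv n bf u i = z i / q i" if i: "i < n" for i
    unfolding mv_bf[OF i] z_def using mv_cong[OF uq] by simp
  have Yu: "dotp n u (mv n bf u) = Y"
    unfolding Y_def dotp_def using Bu qne unfolding u_def by (intro sum.cong refl) auto
  have Nu: "dotp n (mv n bf u) (mv n bf u) = N"
    unfolding N_def dotp_def using Bu qq
    by (intro sum.cong refl) (auto simp: power2_eq_square)
  note sfB = sym_facts[OF bf_sym n2 bf_psd, folded Bm_def, folded eig_C_B]
  have "N \<le> last (eig_list Cm) * Y" using sfB(3) Yu Nu by metis
  hence "\<theta> * Y \<le> last (eig_list Cm) * Y" using NY by simp
  thus th_le: "\<theta> \<le> last (eig_list Cm)" using Ypos by simp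
  obtain xm where xm: "dotp n xm xm = 1" "dotp n xm (mv n bf xm) = last (eig_list Cm)" using sfB(6) by blast
  have "last (eig_list Cm) \<le> 2" using bf_le2[of xm] xm by simp
  thus "\<theta> \<le> 2" using th_le by simp
  show "eig_list Cm ! 1 - lam / (lam + mu * mineta) \<le> \<theta>"
  proof -
    define c where "c = lam / (lam + mu * mineta)"
    have den: "lam + mu * mineta > 0" using lam mu mineta(1) by (simp add: add_pos_pos)
    define e1 where "e1 = eig_list Cm ! 1"
    obtain a b where ab: "a \<noteq> 0 \<or> b \<noteq> 0"
      and ineq: "e1 * dotp n (\<lambda>i. a * u i + b * q i) (mv n bf (\<lambda>i. a * u i + b * q i))
             \<le> dotp n (mv n bf (\<lambda>i. a * u i + b * q i)) (mv n bf (\<lambda>i. a * u i + b * q i))"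
      using sfB(4) unfolding e1_def by blast
    define t where "t = (\<lambda>i. a * u i + b * q i)"
    define w where "w = (\<lambda>i. a * y i + b * 1)"
    have tq: "\<forall>j<n. t j / q j = w j" unfolding t_def w_def u_def using qne by (simp add: field_simps)
    have Aw: "mv n af w i = a * z i + b * lam" if i: "i < n" for i
      unfolding w_def mv_lin z_def using mv_af_one[OF i, of 1] by simp
    have Bt: "mv n bf t i = (a * z i + b * lam) / q i" if i: "i < n" for i
      unfolding mv_bf[OF i] using mv_cong[OF tq] Aw[OF i] by simp
    define T1 where "T1 = dotp n t (mv n bf t)"
    define T2 where "T2 = dotp n (mv n bf t) (mv n bf t)"
    have T1w: "T1 = (\<Sum>i<n. w i * (a * z i + b * lam))"
      unfolding T1_def dotp_def using Bt tq qne
      by (intro sum.cong refl) (auto simp: field_simps)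
    have T1e: "T1 = a\<^sup>2 * Y + b\<^sup>2 * lam * real n"
    proof -
      have "T1 = a\<^sup>2 * (\<Sum>i<n. y i * z i) + a * b * lam * (\<Sum>i<n. y i) + a * b * (\<Sum>i<n. z i) + real n * (b\<^sup>2 * lam)"
        unfolding T1w w_def mult_1_right by (rule sum_four)
      thus ?thesis unfolding Y_def dotp_def using ysum zsum by (simp add: mult_ac)
    qed
    have T1pos: "T1 > 0"
    proof -
      have "T1 = dotp n w (mv n af w)" unfolding T1w dotp_def using Aw by simp
      moreover have "\<exists>i<n. w i \<noteq> 0"
      proof (rule ccontr)
        assume "\<not> ?thesis"
        hence w0: "\<forall>i<n. a * y i + b = 0" unfolding w_def by simp
        hence "(\<Sum>i<n. a * y i + b) = 0" by simp
        hence "a * (\<Sum>i<n. y i) + real n * b = 0" by (simp add: sum.distrib sum_distrib_left)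
        hence b0: "b = 0" using ysum n2 by simp
        obtain i where i: "i < n" "y i \<noteq> 0" using ynz by blast
        have "a * y i = 0" using w0 i(1) b0 by simp
        hence "a = 0" using i(2) by simp
        thus False using ab b0 by simp
      qed
      ultimately show ?thesis using quad_af_pos by simp
    qed
    define X where "X = (\<Sum>i<n. z i / p i)"
    define S where "S = (\<Sum>i<n. 1 / p i)"
    have T2e: "T2 = a\<^sup>2 * N + 2 * a * b * lam * X + b\<^sup>2 * lam\<^sup>2 * S"
    proof -
      have "T2 = (\<Sum>i<n. a\<^sup>2 * ((z i)\<^sup>2 / p i) + 2 * a * b * lam * (z i / p i) + b\<^sup>2 * lam\<^sup>2 * (1 / p i))"
        unfolding T2_def dotp_def
      proof (intro sum.cong refl)
        fix i assume i: "i \<in> {..<n}"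
        hence i': "i < n" by simp
        have pne: "p i \<noteq> 0" using ppos[OF i'] by simp
        have "mv n bf t i * mv n bf t i = (a * z i + b * lam)\<^sup>2 / (q i * q i)"
          using Bt[OF i'] by (simp add: power2_eq_square)
        also have "q i * q i = p i" using qq[OF i'] .
        also have "(a * z i + b * lam)\<^sup>2 / p i = a\<^sup>2 * ((z i)\<^sup>2 / p i) + 2 * a * b * lam * (z i / p i) + b\<^sup>2 * lam\<^sup>2 * (1 / p i)"
          using sq_div_expand[OF pne] .
        finally show "mv n bf t i * mv n bf t i = a\<^sup>2 * ((z i)\<^sup>2 / p i) + 2 * a * b * lam * (z i / p i) + b\<^sup>2 * lam\<^sup>2 * (1 / p i)" .
      qed
      thus ?thesis unfolding N_def X_def S_def by (simp add: sum.distrib sum_distrib_left)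
    qed
    have hS: "lam\<^sup>2 * S \<le> c * lam * real n"
    proof -
      have "S \<le> (\<Sum>i<n. 1 / (lam + mu * mineta))"
        unfolding S_def
      proof (intro sum_mono)
        fix i assume i: "i \<in> {..<n}"
        have "mu * mineta \<le> mu * eta i" using mineta(2) i mu by (intro mult_left_mono) auto
        hence "lam + mu * mineta \<le> p i" using pge'[of i] i by simp
        thus "1 / p i \<le> 1 / (lam + mu * mineta)" using den by (intro divide_left_mono) auto
      qed
      hence "S \<le> real n / (lam + mu * mineta)" by simp
      hence "lam\<^sup>2 * S \<le> lam\<^sup>2 * (real n / (lam + mu * mineta))" by (intro mult_left_mono) auto
      also have "\<dots> = c * lam * real n" unfolding c_def by (simp add: power2_eq_square)
      finally show ?thesis .
    qed
    have hX: "X\<^sup>2 \<le> N * S"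
    proof -
      have "X = (\<Sum>i<n. (z i / q i) * (1 / q i))" unfolding X_def using qq by (intro sum.cong refl) auto
      moreover have "N = (\<Sum>i<n. (z i / q i)\<^sup>2)" unfolding N_def using qq
        by (intro sum.cong refl) (auto simp: power2_eq_square)
      moreover have "S = (\<Sum>i<n. (1 / q i)\<^sup>2)" unfolding S_def using qq
        by (intro sum.cong refl) (auto simp: power2_eq_square)
      ultimately show ?thesis using cs_sum[of "\<lambda>i. z i / q i" "\<lambda>i. 1 / q i" n] by simp
    qed
    have cnn: "c \<ge> 0" unfolding c_def using lam den by simp
    have thY: "\<theta> * Y \<ge> 0" using thpos Ypos by simp
    define P1 where "P1 = c * a\<^sup>2 * Y"
    define P2 where "P2 = \<theta> * b\<^sup>2 * lam * real n"
    have P1nn: "P1 \<ge> 0" unfolding P1_def using cnn Ypos by simp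
    have P2nn: "P2 \<ge> 0" unfolding P2_def using thpos lam by simp
    have "(lam * X)\<^sup>2 \<le> lam\<^sup>2 * (N * S)" using hX by (simp add: power_mult_distrib mult_left_mono)
    also have "\<dots> = (\<theta> * Y) * (lam\<^sup>2 * S)" using NY by (simp add: mult_ac)
    also have "\<dots> \<le> (\<theta> * Y) * (c * lam * real n)" using hS thY by (rule mult_left_mono)
    finally have lx: "(lam * X)\<^sup>2 \<le> \<theta> * Y * (c * lam * real n)" .
    have "(2 * a * b * lam * X)\<^sup>2 = 4 * (a\<^sup>2 * b\<^sup>2) * (lam * X)\<^sup>2" by (simp add: power2_eq_square mult_ac)
    also have "\<dots> \<le> 4 * (a\<^sup>2 * b\<^sup>2) * (\<theta> * Y * (c * lam * real n))" using lx by (rule mult_left_mono) auto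
    also have "\<dots> = 4 * P1 * P2" unfolding P1_def P2_def by (simp add: mult_ac)
    also have "\<dots> \<le> (P1 + P2)\<^sup>2" by (rule four_le_sq)
    finally have "(2 * a * b * lam * X)\<^sup>2 \<le> (P1 + P2)\<^sup>2" .
    hence cross: "2 * a * b * lam * X \<le> P1 + P2" using P1nn P2nn by (metis power2_le_imp_le add_nonneg_nonneg)
    have "b\<^sup>2 * (lam\<^sup>2 * S) \<le> b\<^sup>2 * (c * lam * real n)" using hS by (rule mult_left_mono) auto
    hence "T2 \<le> a\<^sup>2 * N + (P1 + P2) + b\<^sup>2 * (c * lam * real n)"
      unfolding T2e using cross by (simp add: mult.assoc)
    also have "\<dots> = (\<theta> + c) * T1" unfolding T1e P1_def P2_def NY by (simp add: algebra_simps)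
    finally have "e1 * T1 \<le> (\<theta> + c) * T1" using ineq unfolding T1_def T2_def t_def by linarith
    hence "e1 \<le> \<theta> + c" using T1pos by simp
    thus ?thesis unfolding e1_def c_def by simp
  qed
  show "\<theta> \<le> real n / (real n - 1) * (last (eig_list Lm) / (eig_list Lm ! 1))"
  proof -
    note sfL = sym_facts[OF lf_sym n2 lf_psd, folded Lm_def]
    define rho where "rho = last (eig_list Lm)"
    define aL where "aL = eig_list Lm ! 1"
    define m where "m = mineta"
    have aLpos: "aL > 0" unfolding aL_def by (rule aL_pos)
    have mpos: "m > 0" unfolding m_def using mineta(1) .
    obtain i0 where i0: "i0 < n" "m = eta i0" using mineta(3) unfolding m_def by blast
    define e where "e = (\<lambda>i. if i = i0 then 1 else (0::real))"
    have ee: "dotp n e e = 1" unfolding e_def using dotp_unit[OF i0(1)] by simp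
    have eLe: "dotp n e (mv n lf e) = m"
      unfolding e_def dotp_unit[OF i0(1)] mv_unit[OF i0(1) i0(1)] lf_def using i0 gdiag by simp
    have rho_m: "m \<le> rho" using sfL(2) ee eLe unfolding rho_def by (metis mult.right_neutral)
    have rho_nn: "rho \<ge> 0" using rho_m mpos by simp
    define yy where "yy = dotp n y y"
    define yLy where "yLy = dotp n y (mv n lf y)"
    define LL where "LL = dotp n (mv n lf y) (mv n lf y)"
    have h1: "yLy \<le> rho * yy" unfolding yLy_def yy_def rho_def using sfL(2) by blast
    have h2: "LL \<le> rho * yLy" unfolding LL_def yLy_def rho_def using sfL(3) by blast
    have yLy_nn: "yLy \<ge> 0" unfolding yLy_def using quad_lf_nn .
    have Ye: "Y = lam * yy + mu * yLy" unfolding Y_def z_def yy_def yLy_def using quad_af .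
    define zz where "zz = (\<Sum>i<n. (z i)\<^sup>2)"
    have zze: "zz = lam\<^sup>2 * yy + 2 * lam * mu * yLy + mu\<^sup>2 * LL"
    proof -
      have "zz = (\<Sum>i<n. lam\<^sup>2 * (y i * y i) + 2 * lam * mu * (y i * mv n lf y i) + mu\<^sup>2 * (mv n lf y i * mv n lf y i))"
        unfolding zz_def z_def by (intro sum.cong refl) (simp add: mv_af power2_eq_square algebra_simps)
      thus ?thesis unfolding yy_def yLy_def LL_def dotp_def by (simp add: sum.distrib sum_distrib_left)
    qed
    have zzY: "zz \<le> (lam + mu * rho) * Y"
    proof -
      have a1: "lam * mu * (rho * yy - yLy) \<ge> 0" using h1 lam mu by simp
      have a2: "mu\<^sup>2 * (rho * yLy - LL) \<ge> 0" using h2 by simp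
      have "(lam + mu * rho) * Y - zz = lam * mu * (rho * yy - yLy) + mu\<^sup>2 * (rho * yLy - LL)"
        unfolding Ye zze by (simp add: power2_eq_square algebra_simps)
      thus ?thesis using a1 a2 by linarith
    qed
    have Nzz: "N \<le> zz / (lam + mu * m)"
    proof -
      have den: "lam + mu * m > 0" using lam mu mpos by (simp add: add_pos_pos)
      have "N \<le> (\<Sum>i<n. (z i)\<^sup>2 / (lam + mu * m))"
        unfolding N_def
      proof (rule sum_mono)
        fix i assume i: "i \<in> {..<n}"
        have "mu * m \<le> mu * eta i" using mineta(2) i mu unfolding m_def by (intro mult_left_mono) auto
        hence "lam + mu * m \<le> p i" using pge'[of i] i by simp
        thus "(z i)\<^sup>2 / p i \<le> (z i)\<^sup>2 / (lam + mu * m)" using den by (intro divide_left_mono) auto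
      qed
      thus ?thesis unfolding zz_def by (simp add: sum_divide_distrib)
    qed
    have den: "lam + mu * m > 0" using lam mu mpos by (simp add: add_pos_pos)
    have "\<theta> * Y \<le> (lam + mu * rho) * Y / (lam + mu * m)"
      using NY Nzz zzY den by (smt (verit) divide_right_mono)
    moreover have "(lam + mu * rho) * Y / (lam + mu * m) = ((lam + mu * rho) / (lam + mu * m)) * Y" by simp
    ultimately have "\<theta> * Y \<le> ((lam + mu * rho) / (lam + mu * m)) * Y" by linarith
    hence th1: "\<theta> \<le> (lam + mu * rho) / (lam + mu * m)" using mult_right_le_imp_le[OF _ Ypos] by blast
    have "(lam + mu * rho) * m \<le> rho * (lam + mu * m)"
    proof -
      have "lam * m \<le> lam * rho" using rho_m lam by simp
      thus ?thesis by (simp add: algebra_simps)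
    qed
    hence th2: "(lam + mu * rho) / (lam + mu * m) \<le> rho / m"
      using den mpos by (simp add: divide_le_eq le_divide_eq mult.commute)
    \<comment> \<open>step 2: Fiedler bound\<close>
    obtain a b where ab: "a \<noteq> 0 \<or> b \<noteq> 0"
      and ineq: "aL * dotp n (\<lambda>i. a * 1 + b * e i) (\<lambda>i. a * 1 + b * e i)
          \<le> dotp n (\<lambda>i. a * 1 + b * e i) (mv n lf (\<lambda>i. a * 1 + b * e i))"
      using sfL(4)[rule_format, of "\<lambda>_. 1" e] unfolding aL_def by blast
    define t where "t = (\<lambda>i. a * 1 + b * e i)"
    have Lt: "mv n lf t i = b * lf i i0" if i: "i < n" for i
      unfolding t_def mv_lin using mv_lf_one[OF i, of 1] mv_unit[OF i i0(1)] unfolding e_def by simp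
    have tLt: "dotp n t (mv n lf t) = b\<^sup>2 * m"
    proof -
      have "dotp n t (mv n lf t) = dotp n t (\<lambda>i. b * lf i i0)" by (rule dotp_cong) (auto simp: Lt)
      also have "\<dots> = a * b * (\<Sum>i<n. lf i i0) + b * b * dotp n e (\<lambda>i. lf i i0)"
        unfolding t_def dotp_def by (simp add: algebra_simps sum.distrib sum_distrib_left)
      also have "dotp n e (\<lambda>i. lf i i0) = m" unfolding e_def dotp_unit[OF i0(1)] lf_def using i0 gdiag by simp
      finally show ?thesis using colsum_lf[OF i0(1)] by (simp add: power2_eq_square)
    qed
    have tt: "dotp n t t = real n * a\<^sup>2 + 2 * a * b + b\<^sup>2"
    proof -
      have "dotp n t t = (\<Sum>i<n. a * a + 2 * a * b * e i + b * b * (e i * e i))"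
        unfolding t_def dotp_def by (intro sum.cong refl) (simp add: algebra_simps)
      also have "\<dots> = real n * (a * a) + 2 * a * b * (\<Sum>i<n. e i) + b * b * dotp n e e"
        unfolding dotp_def by (simp add: sum.distrib sum_distrib_left)
      also have "(\<Sum>i<n. e i) = 1" unfolding e_def using i0 by simp
      finally show ?thesis using ee by (simp add: power2_eq_square)
    qed
    have ineq2: "aL * (real n * a\<^sup>2 + 2 * a * b + b\<^sup>2) \<le> b\<^sup>2 * m"
      using ineq unfolding t_def[symmetric] tt tLt .
    have b0: "b \<noteq> 0"
    proof
      assume b: "b = 0"
      hence "a \<noteq> 0" using ab by simp
      hence "real n * a\<^sup>2 > 0" using n2 by simp
      hence "aL * (real n * a\<^sup>2) > 0" using aLpos by (rule mult_pos_pos[rotated])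
      moreover have "aL * (real n * a\<^sup>2) \<le> 0" using ineq2 b by simp
      ultimately show False by linarith
    qed
    have "(real n - 1) * b\<^sup>2 \<le> real n * (real n * a\<^sup>2 + 2 * a * b + b\<^sup>2)"
    proof -
      have "real n * (real n * a\<^sup>2 + 2 * a * b + b\<^sup>2) - (real n - 1) * b\<^sup>2 = (real n * a + b)\<^sup>2"
        by (simp add: power2_eq_square algebra_simps)
      thus ?thesis using zero_le_power2[of "real n * a + b"] by linarith
    qed
    hence "aL * ((real n - 1) * b\<^sup>2) \<le> aL * (real n * (real n * a\<^sup>2 + 2 * a * b + b\<^sup>2))"
      using aLpos by (simp add: mult_left_mono)
    also have "\<dots> = real n * (aL * (real n * a\<^sup>2 + 2 * a * b + b\<^sup>2))" by (simp add: mult_ac)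
    also have "\<dots> \<le> real n * (b\<^sup>2 * m)" using ineq2 by (simp add: mult_left_mono)
    finally have "((real n - 1) * aL) * b\<^sup>2 \<le> (real n * m) * b\<^sup>2" by (simp add: mult_ac)
    hence fied: "(real n - 1) * aL \<le> real n * m" using b0 by simp
    have n1: "real n - 1 > 0" using n2 by simp
    have "rho / m \<le> real n / (real n - 1) * (rho / aL)"
    proof -
      have "rho * ((real n - 1) * aL) \<le> rho * (real n * m)" using fied rho_nn by (rule mult_left_mono)
      thus ?thesis using mpos aLpos n1 by (simp add: field_simps)
    qed
    thus ?thesis using th1 th2 unfolding rho_def aL_def by linarith
  qed
qed


lemma core_complex:
  fixes y :: "nat \<Rightarrow> complex" and \<beta> z :: complex
  assumes ynz: "\<exists>i<n. y i \<noteq> 0" and ysum: "(\<Sum>i<n. y i) = 0"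
    and ev: "\<forall>i<n. (\<Sum>j<n. complex_of_real (af i j) * y j) = complex_of_real (p i) * (\<beta> + z * y i)"
  shows "Im z = 0"
proof -
  define w where "w = (\<lambda>i. \<Sum>j<n. complex_of_real (af i j) * y j)"
  define ra where "ra = (\<lambda>i. Re (y i))"
  define ib where "ib = (\<lambda>i. Im (y i))"
  have Rew: "Re (w i) = mv n af ra i" for i
    unfolding w_def mv_def ra_def Re_sum by simp
  have Imw: "Im (w i) = mv n af ib i" for i
    unfolding w_def mv_def ib_def Im_sum by simp
  have "Re (\<Sum>i<n. w i) = 0" unfolding Re_sum Rew sum_mv_af ra_def
    using arg_cong[OF ysum, of Re] by (simp add: Re_sum)
  moreover have "Im (\<Sum>i<n. w i) = 0" unfolding Im_sum Imw sum_mv_af ib_def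
    using arg_cong[OF ysum, of Im] by (simp add: Im_sum)
  ultimately have wsum: "(\<Sum>i<n. w i) = 0" by (simp add: complex_eq_iff)
  define H where "H = (\<Sum>i<n. cnj (w i) * y i)"
  define R where "R = (\<Sum>i<n. (cmod (w i))\<^sup>2 / p i)"
  have "(\<Sum>i<n. cnj (w i) * (\<beta> + z * y i)) = complex_of_real R"
    unfolding R_def of_real_sum
  proof (intro sum.cong refl)
    fix i assume i: "i \<in> {..<n}"
    have pne: "p i \<noteq> 0" using ppos i by (metis lessThan_iff less_irrefl)
    have "w i = complex_of_real (p i) * (\<beta> + z * y i)" using ev i unfolding w_def by simp
    hence "\<beta> + z * y i = w i / complex_of_real (p i)" using pne by (simp add: field_simps)
    hence "cnj (w i) * (\<beta> + z * y i) = (cnj (w i) * w i) / complex_of_real (p i)" by simp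
    also have "cnj (w i) * w i = complex_of_real ((cmod (w i))\<^sup>2)"
      by (metis complex_norm_square mult.commute of_real_power)
    finally show "cnj (w i) * (\<beta> + z * y i) = complex_of_real ((cmod (w i))\<^sup>2 / p i)" by simp
  qed
  moreover have "(\<Sum>i<n. cnj (w i) * (\<beta> + z * y i)) = \<beta> * cnj (\<Sum>i<n. w i) + z * H"
    unfolding H_def cnj_sum by (simp add: distrib_left sum.distrib sum_distrib_left mult_ac)
  ultimately have zH: "z * H = complex_of_real R" using wsum by simp
  have ReH: "Re H = dotp n ra (mv n af ra) + dotp n ib (mv n af ib)"
    unfolding H_def Re_sum dotp_def by (simp add: Rew Imw ra_def ib_def sum.distrib mult_ac)
  have ImH: "Im H = dotp n ib (mv n af ra) - dotp n ra (mv n af ib)"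
    unfolding H_def Im_sum dotp_def by (simp add: Rew Imw ra_def ib_def sum_subtractf mult_ac)
  have "dotp n ib (mv n af ra) = dotp n ra (mv n af ib)"
    using dotp_sym_mv[OF af_sym, of ib ra] by (simp add: dotp_comm)
  hence ImH0: "Im H = 0" using ImH by simp
  obtain i where i: "i < n" "y i \<noteq> 0" using ynz by blast
  have ReHpos: "Re H > 0"
  proof (cases "ra i = 0")
    case True
    hence "ib i \<noteq> 0" using i unfolding ra_def ib_def by (simp add: complex_eq_iff)
    hence "dotp n ib (mv n af ib) > 0" using quad_af_pos i by blast
    thus ?thesis unfolding ReH using quad_af_nn[of ra] by simp
  next
    case False
    hence "dotp n ra (mv n af ra) > 0" using quad_af_pos i by blast
    thus ?thesis unfolding ReH using quad_af_nn[of ib] by simp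
  qed
  have "Im (z * H) = 0" using zH by simp
  hence "Im z * Re H = 0" using ImH0 by simp
  thus ?thesis using ReHpos by simp
qed

end



lemma derive_complex:
  fixes T X C B :: "real mat" and n :: nat and zc :: complex
  assumes n: "n \<ge> 2" and cT: "T \<in> carrier_mat n n" and cX: "X \<in> carrier_mat n n"
    and cC: "C \<in> carrier_mat n n" and cB: "B \<in> carrier_mat n n"
    and XT: "X * T = C * X" and BX: "B * X = 1\<^sub>m n"
    and c0: "\<forall>i<n. X$$(i,0) = c0" and cs: "\<forall>j. 1 \<le> j \<and> j < n \<longrightarrow> (\<Sum>i<n. X$$(i,j)) = 0"
    and ev: "eigenvalue (map_mat complex_of_real (pi2 T)) zc"
  shows "\<exists>y \<beta>. (\<exists>i<n. y i \<noteq> 0) \<and> (\<Sum>i<n. y i) = 0 \<and>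
           (\<forall>i<n. (\<Sum>j<n. complex_of_real (C$$(i,j)) * y j) = \<beta> + zc * y i)"
proof -
  define m where "m = n - 1"
  have nm: "n = Suc m" using n unfolding m_def by simp
  have dimM: "dim_row (map_mat complex_of_real (pi2 T)) = m" using cT unfolding pi2_def m_def by simp
  from ev obtain v where v: "v \<in> carrier_vec m" "v \<noteq> 0\<^sub>v m"
      "map_mat complex_of_real (pi2 T) *\<^sub>v v = zc \<cdot>\<^sub>v v"
    unfolding eigenvalue_def eigenvector_def dimM by blast
  have evi: "(\<Sum>j<m. complex_of_real (T$$(Suc i, Suc j)) * v$j) = zc * v$i" if i: "i < m" for i
  proof -
    have "(map_mat complex_of_real (pi2 T) *\<^sub>v v) $ i = (zc \<cdot>\<^sub>v v) $ i" using v(3) by simp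
    thus ?thesis using i v(1) cT unfolding pi2_def m_def
      by (simp add: scalar_prod_def atLeast0LessThan)
  qed
  define x where "x = (\<lambda>j. if j = 0 then 0 else v$(j - 1))"
  have evx: "(\<Sum>j<n. complex_of_real (T$$(k, j)) * x j) = zc * x k" if k: "1 \<le> k" "k < n" for k
  proof -
    obtain i where ki: "k = Suc i" and i: "i < m" using k nm by (cases k) auto
    have "(\<Sum>j<n. complex_of_real (T$$(k, j)) * x j) = complex_of_real (T$$(k, 0)) * x 0 + (\<Sum>j<m. complex_of_real (T$$(k, Suc j)) * x (Suc j))"
      unfolding nm by (rule sum.lessThan_Suc_shift)
    also have "\<dots> = zc * x k" using evi[OF i] unfolding x_def ki by simp
    finally show ?thesis .
  qed
  define y where "y = (\<lambda>i. \<Sum>j<n. complex_of_real (X$$(i,j)) * x j)"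
  define w where "w = (\<lambda>k. \<Sum>j<n. complex_of_real (T$$(k,j)) * x j)"
  have CX: "(C * X)$$(i,j) = (\<Sum>k<n. C$$(i,k) * X$$(k,j))" if "i < n" "j < n" for i j
    using that cC cX by (simp add: scalar_prod_def atLeast0LessThan)
  have XTe: "(X * T)$$(i,j) = (\<Sum>k<n. X$$(i,k) * T$$(k,j))" if "i < n" "j < n" for i j
    using that cT cX by (simp add: scalar_prod_def atLeast0LessThan)
  have BXe: "(B * X)$$(i,j) = (\<Sum>k<n. B$$(i,k) * X$$(k,j))" if "i < n" "j < n" for i j
    using that cB cX by (simp add: scalar_prod_def atLeast0LessThan)
  have main: "(\<Sum>k<n. complex_of_real (C$$(i,k)) * y k) = complex_of_real c0 * w 0 + zc * y i"
    if i: "i < n" for i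
  proof -
    have "(\<Sum>k<n. complex_of_real (C$$(i,k)) * y k) = (\<Sum>k<n. \<Sum>j<n. complex_of_real (C$$(i,k)) * (complex_of_real (X$$(k,j)) * x j))"
      unfolding y_def by (simp add: sum_distrib_left)
    also have "\<dots> = (\<Sum>j<n. \<Sum>k<n. complex_of_real (C$$(i,k)) * (complex_of_real (X$$(k,j)) * x j))"
      by (rule sum.swap)
    also have "\<dots> = (\<Sum>j<n. complex_of_real ((C * X)$$(i,j)) * x j)"
      using i by (intro sum.cong refl) (simp add: CX sum_distrib_right sum_distrib_left mult_ac)
    also have "\<dots> = (\<Sum>j<n. complex_of_real ((X * T)$$(i,j)) * x j)" unfolding XT ..
    also have "\<dots> = (\<Sum>j<n. \<Sum>k<n. complex_of_real (X$$(i,k)) * (complex_of_real (T$$(k,j)) * x j))"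
      using i by (intro sum.cong refl) (simp add: XTe sum_distrib_right sum_distrib_left mult_ac)
    also have "\<dots> = (\<Sum>k<n. \<Sum>j<n. complex_of_real (X$$(i,k)) * (complex_of_real (T$$(k,j)) * x j))"
      by (rule sum.swap)
    also have "\<dots> = (\<Sum>k<n. complex_of_real (X$$(i,k)) * w k)"
      unfolding w_def by (simp add: sum_distrib_left)
    also have "\<dots> = complex_of_real (X$$(i,0)) * w 0 + (\<Sum>k<m. complex_of_real (X$$(i,Suc k)) * w (Suc k))"
      unfolding nm by (rule sum.lessThan_Suc_shift)
    also have "(\<Sum>k<m. complex_of_real (X$$(i,Suc k)) * w (Suc k)) = (\<Sum>k<m. zc * (complex_of_real (X$$(i,Suc k)) * x (Suc k)))"
      using evx nm unfolding w_def by (intro sum.cong refl) (simp add: mult_ac)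
    also have "\<dots> = zc * y i"
    proof -
      have "y i = complex_of_real (X$$(i,0)) * x 0 + (\<Sum>k<m. complex_of_real (X$$(i,Suc k)) * x (Suc k))"
        unfolding y_def nm by (rule sum.lessThan_Suc_shift)
      thus ?thesis unfolding x_def by (simp add: sum_distrib_left)
    qed
    finally show ?thesis using c0 i by simp
  qed
  have ysum: "(\<Sum>i<n. y i) = 0"
  proof -
    have "(\<Sum>i<n. y i) = (\<Sum>j<n. \<Sum>i<n. complex_of_real (X$$(i,j)) * x j)"
      unfolding y_def by (rule sum.swap)
    also have "\<dots> = (\<Sum>j<n. complex_of_real (\<Sum>i<n. X$$(i,j)) * x j)"
      by (simp add: sum_distrib_right)
    also have "\<dots> = 0"
    proof (rule sum.neutral, intro ballI)
      fix j assume j: "j \<in> {..<n}"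
      show "complex_of_real (\<Sum>i<n. X$$(i,j)) * x j = 0"
      proof (cases "j = 0")
        case True thus ?thesis unfolding x_def by simp
      next
        case False thus ?thesis using cs j by simp
      qed
    qed
    finally show ?thesis .
  qed
  have ynz: "\<exists>i<n. y i \<noteq> 0"
  proof (rule ccontr)
    assume "\<not> ?thesis"
    hence y0: "\<forall>i<n. y i = 0" by simp
    have "x l = 0" if l: "l < n" for l
    proof -
      have "(\<Sum>i<n. complex_of_real (B$$(l,i)) * y i) = (\<Sum>i<n. \<Sum>j<n. complex_of_real (B$$(l,i)) * (complex_of_real (X$$(i,j)) * x j))"
        unfolding y_def by (simp add: sum_distrib_left)
      also have "\<dots> = (\<Sum>j<n. \<Sum>i<n. complex_of_real (B$$(l,i)) * (complex_of_real (X$$(i,j)) * x j))"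
        by (rule sum.swap)
      also have "\<dots> = (\<Sum>j<n. complex_of_real ((B * X)$$(l,j)) * x j)"
        using l by (intro sum.cong refl) (simp add: BXe sum_distrib_right sum_distrib_left mult_ac)
      also have "\<dots> = (\<Sum>j<n. (if l = j then x j else 0))"
        unfolding BX using l by (intro sum.cong refl) auto
      also have "\<dots> = x l" using l by simp
      finally show ?thesis using y0 by simp
    qed
    hence "v = 0\<^sub>v m"
    proof (intro eq_vecI)
      fix i assume "\<And>l. l < n \<Longrightarrow> x l = 0" and i: "i < dim_vec (0\<^sub>v m)"
      hence "x (Suc i) = 0" using nm by simp
      thus "v $ i = 0\<^sub>v m $ i" using i unfolding x_def by simp
    qed (use v(1) in simp)
    thus False using v(2) by simp
  qed
  show ?thesis using ynz ysum main
    by (intro exI[of _ y] exI[of _ "complex_of_real c0 * w 0"]) auto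
qed


lemma sum_upto_j:
  fixes c1 c2 :: real
  assumes j: "j < n"
  shows "(\<Sum>i<n. (if i < j then c1 else if i = j then c2 else 0)) = real j * c1 + c2"
proof -
  have "(\<Sum>i<n. (if i < j then c1 else if i = j then c2 else 0)) = (\<Sum>i<Suc j. (if i < j then c1 else if i = j then c2 else 0))"
    using j by (intro sum.mono_neutral_right) auto
  also have "\<dots> = (\<Sum>i<j. (if i < j then c1 else if i = j then c2 else 0)) + c2" by simp
  also have "(\<Sum>i<j. (if i < j then c1 else if i = j then c2 else 0)) = (\<Sum>i<j. c1)" by (intro sum.cong refl) auto
  finally show ?thesis by simp
qed

definition sj :: "nat \<Rightarrow> real" where "sj j = sqrt (real (j+1) * real j)"

lemma sj_pos: "j \<ge> 1 \<Longrightarrow> sj j > 0" unfolding sj_def by simp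
lemma sj_sq: "sj j * sj j = real (j+1) * real j" unfolding sj_def by simp

lemma U_entry: "i < n \<Longrightarrow> j < n \<Longrightarrow> j \<ge> 1 \<Longrightarrow>
   Umat n $$ (i,j) = (if i < j then 1 else if i = j then - real j else 0) / sj j"
  unfolding Umat_def sj_def Let_def by simp

lemma U_col0: "i < n \<Longrightarrow> Umat n $$ (i,0) = 1 / sqrt (real n)"
  unfolding Umat_def by simp

lemma U_colsum: assumes "1 \<le> j" "j < n" shows "(\<Sum>i<n. Umat n $$ (i,j)) = 0"
proof -
  have "(\<Sum>i<n. Umat n $$ (i,j)) = (\<Sum>i<n. (if i < j then 1 / sj j else if i = j then - real j / sj j else 0))"
    using assms by (intro sum.cong refl) (simp add: U_entry)
  also have "\<dots> = real j * (1 / sj j) + (- real j / sj j)" using assms(2) by (rule sum_upto_j)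
  finally show ?thesis by simp
qed

lemma U_dot: assumes a: "a < n" and b: "b < n"
  shows "(\<Sum>k<n. Umat n $$ (k,a) * Umat n $$ (k,b)) = (if a = b then 1 else 0)"
proof -
  have gen: "(\<Sum>k<n. Umat n $$ (k,a) * Umat n $$ (k,b)) = 0" if ab: "a < b" "b < n" for a b
  proof (cases "a = 0")
    case True
    have "(\<Sum>k<n. Umat n $$ (k,a) * Umat n $$ (k,b)) = (\<Sum>k<n. (1 / sqrt (real n)) * Umat n $$ (k,b))"
      using True ab by (intro sum.cong refl) (simp add: U_col0)
    also have "\<dots> = (1 / sqrt (real n)) * (\<Sum>k<n. Umat n $$ (k,b))" by (rule sum_distrib_left[symmetric])
    also have "\<dots> = 0" using U_colsum[of b n] ab True by simp
    finally show ?thesis .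
  next
    case False
    have "(\<Sum>k<n. Umat n $$ (k,a) * Umat n $$ (k,b)) = (\<Sum>k<n. Umat n $$ (k,a) * (1 / sj b))"
    proof (intro sum.cong refl)
      fix k assume k: "k \<in> {..<n}"
      show "Umat n $$ (k,a) * Umat n $$ (k,b) = Umat n $$ (k,a) * (1 / sj b)"
      proof (cases "k \<le> a")
        case True thus ?thesis using ab k False by (simp add: U_entry)
      next
        case False2: False thus ?thesis using ab k False by (simp add: U_entry)
      qed
    qed
    also have "\<dots> = (\<Sum>k<n. Umat n $$ (k,a)) * (1 / sj b)" by (rule sum_distrib_right[symmetric])
    also have "\<dots> = 0" using U_colsum[of a n] ab False by simp
    finally show ?thesis .
  qed
  show ?thesis
  proof (cases "a = b")
    case True
    show ?thesis
    proof (cases "a = 0")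
      case a0: True
      have "(\<Sum>k<n. Umat n $$ (k,a) * Umat n $$ (k,b)) = (\<Sum>k<n. 1 / real n)"
        using a0 True a by (intro sum.cong refl) (simp add: U_col0)
      thus ?thesis using a True by simp
    next
      case False
      have "(\<Sum>k<n. Umat n $$ (k,a) * Umat n $$ (k,b)) = (\<Sum>k<n. (if k < a then 1 / (sj a * sj a) else if k = a then real a * real a / (sj a * sj a) else 0))"
        using False True a by (intro sum.cong refl) (simp add: U_entry)
      also have "\<dots> = real a * (1 / (sj a * sj a)) + real a * real a / (sj a * sj a)" using a by (rule sum_upto_j)
      also have "\<dots> = 1"
      proof -
        have pos: "real a + real a * real a > 0" using False by (simp add: add_pos_nonneg)
        have D: "sj a * sj a = real a + real a * real a" unfolding sj_sq by (simp add: algebra_simps)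
        have "real a * (1 / (sj a * sj a)) + real a * real a / (sj a * sj a) = (real a + real a * real a) / (sj a * sj a)"
          by (simp add: add_divide_distrib)
        thus ?thesis using pos D by simp
      qed
      finally show ?thesis using True by simp
    qed
  next
    case False
    show ?thesis
    proof (cases "a < b")
      case True thus ?thesis using gen b False by simp
    next
      case False2: False
      hence "b < a" using False by simp
      from gen[OF this a] show ?thesis using False by (simp add: mult.commute)
    qed
  qed
qed

lemma Q_colsum: assumes "1 \<le> j" "j < n" shows "(\<Sum>i<n. Qmat n $$ (i,j)) = 0"
proof -
  have "(\<Sum>i<n. Qmat n $$ (i,j)) = (\<Sum>i<n. (if i = 0 then 1 else 0) + (if i = j then -1 else 0))"
    using assms by (intro sum.cong refl) (auto simp: Qmat_def)
  thus ?thesis using assms by (simp add: sum.distrib)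
qed

lemma X_props:
  assumes n: "n \<ge> 2" and X: "X = Qmat n \<or> X = Umat n"
  shows "X \<in> carrier_mat n n" "\<exists>B \<in> carrier_mat n n. B * X = 1\<^sub>m n"
    "\<exists>c0. \<forall>i<n. X$$(i,0) = c0" "\<forall>j. 1 \<le> j \<and> j < n \<longrightarrow> (\<Sum>i<n. X$$(i,j)) = 0"
proof -
  show "X \<in> carrier_mat n n" using X by (auto simp: Qmat_def Umat_def)
  show "\<exists>c0. \<forall>i<n. X$$(i,0) = c0" using X by (auto simp: Qmat_def U_col0)
  show "\<forall>j. 1 \<le> j \<and> j < n \<longrightarrow> (\<Sum>i<n. X$$(i,j)) = 0" using X U_colsum Q_colsum by auto
  show "\<exists>B \<in> carrier_mat n n. B * X = 1\<^sub>m n"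
  proof (cases "X = Umat n")
    case True
    have "transpose_mat (Umat n) * Umat n = 1\<^sub>m n"
    proof (rule eq_matI)
      fix a b assume a: "a < dim_row (1\<^sub>m n)" and b: "b < dim_col (1\<^sub>m n)"
      have "(transpose_mat (Umat n) * Umat n) $$ (a,b) = (\<Sum>k<n. Umat n $$ (k,a) * Umat n $$ (k,b))"
        using a b by (simp add: Umat_def scalar_prod_def atLeast0LessThan)
      thus "(transpose_mat (Umat n) * Umat n) $$ (a,b) = 1\<^sub>m n $$ (a,b)" using U_dot a b by simp
    qed (auto simp: Umat_def)
    thus ?thesis using True by (intro bexI[of _ "transpose_mat (Umat n)"]) (auto simp: Umat_def)
  next
    case False
    hence XQ: "X = Qmat n" using X by simp
    define B where "B = mat n n (\<lambda>(i,j). if i = 0 then 1 / real n else 1 / real n - (if i = j then 1 else 0))"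
    have cs0: "(\<Sum>k<n. Qmat n $$ (k,0)) = real n" by (simp add: Qmat_def)
    have "B * Qmat n = 1\<^sub>m n"
    proof (rule eq_matI)
      fix a b assume a: "a < dim_row (1\<^sub>m n)" and b: "b < dim_col (1\<^sub>m n)"
      hence a': "a < n" and b': "b < n" by auto
      have e: "(B * Qmat n) $$ (a,b) = (\<Sum>k<n. B $$ (a,k) * Qmat n $$ (k,b))"
        using a' b' by (simp add: B_def Qmat_def scalar_prod_def atLeast0LessThan)
      have colsum: "(\<Sum>k<n. Qmat n $$ (k,b)) = (if b = 0 then real n else 0)"
        using cs0 Q_colsum[of b n] b' by auto
      show "(B * Qmat n) $$ (a,b) = 1\<^sub>m n $$ (a,b)"
      proof (cases "a = 0")
        case True
        have "(\<Sum>k<n. B $$ (a,k) * Qmat n $$ (k,b)) = (\<Sum>k<n. (1 / real n) * Qmat n $$ (k,b))"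
          using True a' by (intro sum.cong refl) (simp add: B_def)
        also have "\<dots> = (1 / real n) * (\<Sum>k<n. Qmat n $$ (k,b))" by (rule sum_distrib_left[symmetric])
        also have "\<dots> = (1 / real n) * (if b = 0 then real n else 0)" by (simp only: colsum)
        finally show ?thesis using e True a' b' n by auto
      next
        case False
        have "(\<Sum>k<n. B $$ (a,k) * Qmat n $$ (k,b)) = (\<Sum>k<n. (1 / real n) * Qmat n $$ (k,b) - (if a = k then Qmat n $$ (k,b) else 0))"
          using False a' by (intro sum.cong refl) (simp add: B_def left_diff_distrib)
        also have "\<dots> = (1 / real n) * (\<Sum>k<n. Qmat n $$ (k,b)) - Qmat n $$ (a,b)"
          using a' by (simp add: sum_subtractf sum_divide_distrib[symmetric])
        also have "\<dots> = (1 / real n) * (if b = 0 then real n else 0) - Qmat n $$ (a,b)" by (simp only: colsum)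
        finally show ?thesis using e False a' b' n by (auto simp: Qmat_def)
      qed
    qed (auto simp: B_def Qmat_def)
    thus ?thesis using XQ by (intro bexI[of _ B]) (auto simp: B_def)
  qed
qed

lemma mat_inv_eq:
  assumes M: "M \<in> carrier_mat n n" and B: "B \<in> carrier_mat n n" and MB: "M * B = 1\<^sub>m n" and BM: "B * M = 1\<^sub>m n"
  shows "mat_inv M = B"
proof -
  have dr: "dim_row M = n" using M by simp
  let ?P = "\<lambda>B. B \<in> carrier_mat n n \<and> M * B = 1\<^sub>m n \<and> B * M = 1\<^sub>m n"
  have "?P B" using B MB BM by simp
  hence "?P (SOME B. ?P B)" by (rule someI)
  hence B': "mat_inv M \<in> carrier_mat n n" "M * mat_inv M = 1\<^sub>m n" "mat_inv M * M = 1\<^sub>m n"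
    unfolding mat_inv_def dr by auto
  have "mat_inv M = mat_inv M * (M * B)" using MB B'(1) by simp
  also have "\<dots> = (mat_inv M * M) * B" using B'(1) M B by (simp add: assoc_mult_mat[of _ n n _ n _ n] mult_carrier_mat[of _ n n _ n])
  also have "\<dots> = B" using B'(3) B by simp
  finally show ?thesis .
qed


lemma real_from_complex:
  fixes c :: "nat \<Rightarrow> nat \<Rightarrow> real" and y :: "nat \<Rightarrow> complex" and \<theta> :: real
  assumes ynz: "\<exists>i<n. y i \<noteq> 0" and ysum: "(\<Sum>i<n. y i) = 0"
    and ev: "\<forall>i<n. (\<Sum>j<n. complex_of_real (c i j) * y j) = \<beta> + complex_of_real \<theta> * y i"
  shows "\<exists>yr br. (\<exists>i<n. yr i \<noteq> 0) \<and> (\<Sum>i<n. yr i) = 0 \<and> (\<forall>i<n. (\<Sum>j<n. c i j * yr j) = br + \<theta> * yr i)"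
proof -
  have re: "(\<Sum>j<n. c i j * Re (y j)) = Re \<beta> + \<theta> * Re (y i)" if "i < n" for i
  proof -
    have "Re (\<Sum>j<n. complex_of_real (c i j) * y j) = Re (\<beta> + complex_of_real \<theta> * y i)" using ev that by simp
    thus ?thesis by (simp add: Re_sum)
  qed
  have im: "(\<Sum>j<n. c i j * Im (y j)) = Im \<beta> + \<theta> * Im (y i)" if "i < n" for i
  proof -
    have "Im (\<Sum>j<n. complex_of_real (c i j) * y j) = Im (\<beta> + complex_of_real \<theta> * y i)" using ev that by simp
    thus ?thesis by (simp add: Im_sum)
  qed
  have sre: "(\<Sum>i<n. Re (y i)) = 0" using arg_cong[OF ysum, of Re] by (simp add: Re_sum)
  have sim: "(\<Sum>i<n. Im (y i)) = 0" using arg_cong[OF ysum, of Im] by (simp add: Im_sum)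
  obtain i where i: "i < n" "y i \<noteq> 0" using ynz by blast
  show ?thesis
  proof (cases "Re (y i) = 0")
    case True
    hence "Im (y i) \<noteq> 0" using i(2) complex_eqI[of "y i" 0] by auto
    thus ?thesis using i(1) sim im
      by (intro exI[of _ "\<lambda>i. Im (y i)"] exI[of _ "Im \<beta>"]) auto
  next
    case False
    thus ?thesis using i(1) sre re
      by (intro exI[of _ "\<lambda>i. Re (y i)"] exI[of _ "Re \<beta>"]) auto
  qed
qed

theorem lemma4p11:
  fixes n :: nat and G :: "real mat" and lam mu :: real and P X :: "real mat"
  assumes n2: "n \<ge> 2"
    and G_carrier: "G \<in> carrier_mat n n"
    and G_sym: "\<forall>i<n. \<forall>j<n. G $$ (i, j) = G $$ (j, i)"
    and G_range: "\<forall>i<n. \<forall>j<n. 0 \<le> G $$ (i, j) \<and> G $$ (i, j) \<le> 1"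
    and G_diag: "\<forall>i<n. G $$ (i, i) = 0"
    and G_rows: "\<forall>i<n. \<exists>j<n. j \<noteq> i \<and> G $$ (i, j) > 0"
    and G_conn: "weighted_connected n G"
    and lam: "lam > 0" and mu: "mu > 0"
    and eta_def: "eta = (\<lambda>i. \<Sum>j<n. G $$ (i, j))"
    and L_def: "L = diag_of n eta - G"
    and A_def: "A = lam \<cdot>\<^sub>m 1\<^sub>m n + mu \<cdot>\<^sub>m L"
    and P_choice: "P = diag_of n (\<lambda>i. lam + mu * eta i)
                   \<or> P = diag_of n (\<lambda>i. sqrt (\<Sum>j<n. (A $$ (i, j))\<^sup>2))"
    and X_choice: "X = Qmat n \<or> X = Umat n"
    and AX_def: "AX = mat_inv X * A * X"
    and DX_def: "DX = mat_inv X * P * X"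
    and M_def: "M = pi2 (mat_inv DX * AX)"
  shows "(\<forall>z. eigenvalue (map_mat complex_of_real M) z \<longrightarrow> Im z = 0)
    \<and> (\<forall>\<theta>. eigenvalue M \<theta> \<longrightarrow> \<theta> > 0)
    \<and> (\<forall>\<theta>. eigenvalue M \<theta> \<longrightarrow>
          alg_conn (mat_inv P * A) - lam / (lam + mu * Min (eta ` {..<n})) \<le> \<theta>
          \<and> \<theta> \<le> spec_rad (mat_inv P * A)
          \<and> \<theta> \<le> min 2 (real n / (real n - 1) * (spec_rad L / alg_conn L)))"
proof -
  define g where "g = (\<lambda>i j. G $$ (i, j))"
  define pf where "pf = (\<lambda>i. P $$ (i, i))"
  have cL: "L \<in> carrier_mat n n" unfolding L_def by (rule minus_carrier_mat[OF G_carrier])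
  have cA: "A \<in> carrier_mat n n" unfolding A_def by (rule add_carrier_mat, rule smult_carrier_mat[OF cL])
  have Lij: "L $$ (i,j) = (if i = j then eta i else 0) - G $$ (i,j)" if "i < n" "j < n" for i j
    unfolding L_def diag_of_def using that G_carrier by simp
  have Aij: "A $$ (i,j) = (if i = j then lam else 0) + mu * L $$ (i,j)" if "i < n" "j < n" for i j
    unfolding A_def using that cL by simp
  have Aii: "A $$ (i,i) = lam + mu * eta i" if "i < n" for i
    using Aij[OF that that] Lij[OF that that] G_diag that by simp
  have cP: "P \<in> carrier_mat n n" using P_choice unfolding diag_of_def by auto
  have Pd: "P = diag_of n pf"
    using P_choice cP unfolding pf_def diag_of_def by (intro eq_matI) auto
  have pge: "\<forall>i<n. pf i \<ge> lam + mu * (\<Sum>j<n. g i j)"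
  proof (intro allI impI)
    fix i assume i: "i < n"
    have e: "(\<Sum>j<n. g i j) = eta i" unfolding g_def eta_def by simp
    show "pf i \<ge> lam + mu * (\<Sum>j<n. g i j)"
    proof (cases "P = diag_of n (\<lambda>i. lam + mu * eta i)")
      case True thus ?thesis using i e unfolding pf_def diag_of_def by simp
    next
      case False
      hence P2: "P = diag_of n (\<lambda>i. sqrt (\<Sum>j<n. (A $$ (i, j))\<^sup>2))" using P_choice by simp
      have "(A $$ (i,i))\<^sup>2 \<le> (\<Sum>j<n. (A $$ (i, j))\<^sup>2)"
        using i by (intro member_le_sum) auto
      hence "sqrt ((A $$ (i,i))\<^sup>2) \<le> sqrt (\<Sum>j<n. (A $$ (i, j))\<^sup>2)" by (rule real_sqrt_le_mono)
      hence "\<bar>A $$ (i,i)\<bar> \<le> pf i" using i P2 unfolding pf_def diag_of_def by simp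
      thus ?thesis using Aii[OF i] e by simp
    qed
  qed
  have etapos: "\<forall>i<n. (\<Sum>j<n. g i j) > 0"
  proof (intro allI impI)
    fix i assume i: "i < n"
    obtain j where j: "j < n" "G $$ (i,j) > 0" using G_rows i by blast
    show "(\<Sum>j<n. g i j) > 0" unfolding g_def
      using sum_pos2[of "{..<n}" j "\<lambda>j. G $$ (i,j)"] j G_range i by auto
  qed
  interpret S: setting n g lam mu pf
  proof
    show "2 \<le> n" by (rule n2)
    show "\<forall>i<n. \<forall>j<n. g i j = g j i" using G_sym unfolding g_def by simp
    show "\<forall>i<n. \<forall>j<n. 0 \<le> g i j" using G_range unfolding g_def by simp
    show "\<forall>i<n. g i i = 0" using G_diag unfolding g_def by simp
    show "0 < lam" "0 < mu" by (rule lam, rule mu)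
    show "\<forall>i<n. 0 < (\<Sum>j<n. g i j)" by (rule etapos)
    show "\<forall>i<n. \<forall>j<n. (i, j) \<in> {(a, b). a < n \<and> b < n \<and> 0 < g a b}\<^sup>*"
      using G_conn unfolding weighted_connected_def g_def by simp
    show "\<forall>i<n. lam + mu * (\<Sum>j<n. g i j) \<le> pf i" using pge by simp
  qed
  have Seta: "S.eta = eta"
  proof (rule ext)
    fix i show "S.eta i = eta i" by (simp only: S.eta_def) (simp add: eta_def g_def)
  qed
  have lfe: "S.lf i j = (if i = j then eta i else 0) - G $$ (i,j)" for i j
    by (simp only: S.lf_def Seta) (simp add: g_def)
  have afe: "S.af i j = (if i = j then lam else 0) + mu * ((if i = j then eta i else 0) - G $$ (i,j))" for i j
    by (simp only: S.af_def lfe)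
  have LS: "L = S.Lm"
    unfolding S.Lm_def using cL Lij by (intro eq_matI) (auto simp: lfe)
  have AS: "A = mat n n (\<lambda>(i,j). S.af i j)"
    using cA Aij Lij by (intro eq_matI) (auto simp: afe)
  define Pinv where "Pinv = diag_of n (\<lambda>i. 1 / pf i)"
  have cPi: "Pinv \<in> carrier_mat n n" unfolding Pinv_def diag_of_def by simp
  have pfne: "i < n \<Longrightarrow> pf i \<noteq> 0" for i using S.ppos by (metis less_irrefl)
  have PPi: "P * Pinv = 1\<^sub>m n"
    unfolding Pd Pinv_def diag_of_def
    by (rule eq_matI) (auto simp: scalar_prod_def atLeast0LessThan if_distrib[of "\<lambda>z. z * _"] pfne cong: if_cong)
  have PiP: "Pinv * P = 1\<^sub>m n"
    unfolding Pd Pinv_def diag_of_def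
    by (rule eq_matI) (auto simp: scalar_prod_def atLeast0LessThan if_distrib[of "\<lambda>z. z * _"] pfne cong: if_cong)
  have mPi: "mat_inv P = Pinv" by (rule mat_inv_eq[OF cP cPi PPi PiP])
  define C where "C = Pinv * A"
  have cC: "C \<in> carrier_mat n n" unfolding C_def using cPi cA by simp
  have CS: "mat_inv P * A = S.Cm"
  proof -
    have "C = S.Cm"
    proof (rule eq_matI)
      fix i j assume "i < dim_row S.Cm" "j < dim_col S.Cm"
      hence i: "i < n" and j: "j < n" by (auto simp: S.Cm_def)
      have "C $$ (i,j) = A $$ (i,j) / pf i"
        unfolding C_def Pinv_def diag_of_def using i j cA
        by (simp add: scalar_prod_def atLeast0LessThan if_distrib[of "\<lambda>z. z * _"] cong: if_cong)
      also have "\<dots> = S.af i j / pf i" using i j AS by simp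
      finally show "C $$ (i,j) = S.Cm $$ (i,j)" using i j by (simp add: S.Cm_def)
    qed (use cC in \<open>auto simp: S.Cm_def\<close>)
    thus ?thesis unfolding C_def mPi .
  qed
  have Cij: "C $$ (i,j) = S.af i j / pf i" if "i < n" "j < n" for i j
    using CS that unfolding mPi C_def[symmetric] by (simp add: S.Cm_def)
  note XP = X_props[OF n2 X_choice]
  obtain B where cB: "B \<in> carrier_mat n n" and BX: "B * X = 1\<^sub>m n" using XP(2) by blast
  obtain c0 where c0: "\<forall>i<n. X$$(i,0) = c0" using XP(3) by blast
  have cX: "X \<in> carrier_mat n n" by (rule XP(1))
  have XB: "X * B = 1\<^sub>m n" using mat_mult_left_right_inverse[OF cB cX BX] .
  have mX: "mat_inv X = B" by (rule mat_inv_eq[OF cX cB XB BX])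
  have cDX: "DX \<in> carrier_mat n n" unfolding DX_def mX using cB cP cX by simp
  define DI where "DI = B * Pinv * X"
  have cDI: "DI \<in> carrier_mat n n" unfolding DI_def using cB cPi cX by simp
  have DXDI: "DX * DI = 1\<^sub>m n"
  proof -
    have "DX * DI = B * P * (X * B) * Pinv * X" unfolding DX_def mX DI_def
      using cB cP cX cPi by (simp add: assoc_mult_mat[of _ n n _ n _ n] mult_carrier_mat[of _ n n _ n])
    also have "\<dots> = B * (P * Pinv) * X" unfolding XB using cB cP cX cPi by (simp add: assoc_mult_mat[of _ n n _ n _ n] mult_carrier_mat[of _ n n _ n])
    also have "\<dots> = 1\<^sub>m n" unfolding PPi using cB cX BX by simp
    finally show ?thesis .
  qed
  have DIDX: "DI * DX = 1\<^sub>m n"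
  proof -
    have "DI * DX = B * Pinv * (X * B) * P * X" unfolding DX_def mX DI_def
      using cB cP cX cPi by (simp add: assoc_mult_mat[of _ n n _ n _ n] mult_carrier_mat[of _ n n _ n])
    also have "\<dots> = B * (Pinv * P) * X" unfolding XB using cB cP cX cPi by (simp add: assoc_mult_mat[of _ n n _ n _ n] mult_carrier_mat[of _ n n _ n])
    also have "\<dots> = 1\<^sub>m n" unfolding PiP using cB cX BX by simp
    finally show ?thesis .
  qed
  have mDX: "mat_inv DX = DI" by (rule mat_inv_eq[OF cDX cDI DXDI DIDX])
  define T where "T = mat_inv DX * AX"
  have TE: "T = B * C * X"
  proof -
    have "T = B * Pinv * (X * B) * A * X" unfolding T_def mDX DI_def AX_def mX
      using cB cPi cX cA by (simp add: assoc_mult_mat[of _ n n _ n _ n] mult_carrier_mat[of _ n n _ n])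
    also have "\<dots> = B * C * X" unfolding XB C_def using cB cPi cX cA by (simp add: assoc_mult_mat[of _ n n _ n _ n] mult_carrier_mat[of _ n n _ n])
    finally show ?thesis .
  qed
  have cT: "T \<in> carrier_mat n n" unfolding TE using cB cC cX by simp
  have XT: "X * T = C * X"
  proof -
    have "X * T = (X * B) * C * X" unfolding TE using cB cC cX by (simp add: assoc_mult_mat[of _ n n _ n _ n] mult_carrier_mat[of _ n n _ n])
    also have "\<dots> = C * X" unfolding XB using cC cX by simp
    finally show ?thesis .
  qed
  have MT: "M = pi2 T" unfolding M_def T_def ..
  have cM: "M \<in> carrier_mat (n - 1) (n - 1)" unfolding MT pi2_def using cT by simp
  have conv: "\<forall>i<n. (\<Sum>j<n. complex_of_real (S.af i j) * y j) = complex_of_real (pf i) * (\<beta> + z * y i)"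
    if h: "\<forall>i<n. (\<Sum>j<n. complex_of_real (C$$(i,j)) * y j) = \<beta> + z * y i" for y \<beta> z
  proof (intro allI impI)
    fix i assume i: "i < n"
    have "(\<Sum>j<n. complex_of_real (S.af i j) * y j) = complex_of_real (pf i) * (\<Sum>j<n. complex_of_real (C$$(i,j)) * y j)"
      unfolding sum_distrib_left using i Cij pfne[OF i] by (intro sum.cong refl) (simp add: field_simps)
    thus "(\<Sum>j<n. complex_of_real (S.af i j) * y j) = complex_of_real (pf i) * (\<beta> + z * y i)" using h i by simp
  qed
  have part1: "\<forall>z. eigenvalue (map_mat complex_of_real M) z \<longrightarrow> Im z = 0"
  proof (intro allI impI)
    fix z assume "eigenvalue (map_mat complex_of_real M) z"
    from derive_complex[OF n2 cT cX cC cB XT BX c0 XP(4) this[unfolded MT]]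
    obtain y \<beta> where y: "\<exists>i<n. y i \<noteq> 0" "(\<Sum>i<n. y i) = 0"
      "\<forall>i<n. (\<Sum>j<n. complex_of_real (C$$(i,j)) * y j) = \<beta> + z * y i" by blast
    show "Im z = 0" by (rule S.core_complex[OF y(1) y(2) conv[OF y(3)]])
  qed
  have core: "\<theta> > 0 \<and> \<theta> \<le> last (eig_list S.Cm) \<and> eig_list S.Cm ! 1 - lam / (lam + mu * S.mineta) \<le> \<theta> \<and> \<theta> \<le> 2
        \<and> \<theta> \<le> real n / (real n - 1) * (last (eig_list S.Lm) / (eig_list S.Lm ! 1))"
    if ev: "eigenvalue M \<theta>" for \<theta>
  proof -
    have "eigenvalue (map_mat complex_of_real M) (complex_of_real \<theta>)"
      using of_real_hom.eigenvalue_hom[OF cM ev] by simp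
    from derive_complex[OF n2 cT cX cC cB XT BX c0 XP(4) this[unfolded MT]]
    obtain y \<beta> where y: "\<exists>i<n. y i \<noteq> 0" "(\<Sum>i<n. y i) = 0"
      "\<forall>i<n. (\<Sum>j<n. complex_of_real (C$$(i,j)) * y j) = \<beta> + complex_of_real \<theta> * y i" by blast
    from real_from_complex[of n y "\<lambda>i j. C$$(i,j)", OF y(1) y(2) y(3)]
    obtain yr br where yr: "\<exists>i<n. yr i \<noteq> 0" "(\<Sum>i<n. yr i) = 0"
      "\<forall>i<n. (\<Sum>j<n. C$$(i,j) * yr j) = br + \<theta> * yr i" by blast
    have evr: "\<forall>i<n. mv n S.af yr i = pf i * (br + \<theta> * yr i)"
    proof (intro allI impI)
      fix i assume i: "i < n"
      have "mv n S.af yr i = pf i * (\<Sum>j<n. C$$(i,j) * yr j)"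
        unfolding mv_def sum_distrib_left using i Cij pfne[OF i] by (intro sum.cong refl) (simp add: field_simps)
      thus "mv n S.af yr i = pf i * (br + \<theta> * yr i)" using yr(3) i by simp
    qed
    note cr = S.core_real[OF yr(1) yr(2) evr]
    show ?thesis using cr by blast
  qed
  have mS: "Min (eta ` {..<n}) = S.mineta" unfolding S.mineta_def Seta ..
  show ?thesis
    unfolding spec_rad_def alg_conn_def CS LS mS
    using part1 core by auto
qed

end
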